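(* Let $G$ be a finite group and $H \le G$ a subgroup with $H \neq \{e\}$. Let $C_{\min}$ be a non-identity conjugacy class of $G$ of minimal size among the non-identity conjugacy classes that intersect $H$ non-trivially. Then \[ |H|^{-1}|C_{\min}|^{-1} < D_H \le (|H|-1)\,|C_{\min}|^{-1/2}. \]
   Context: For a finite group $G$, let $\mathrm{Irr}(G)$ be its set of complex irreducible characters and $d_\chi=\chi(e)$. For $H \le G$ let $D_H = \frac{1}{|G|}\sum_{\chi \in \mathrm{Irr}(G)} d_\chi \big|\sum_{h \in H, h \neq e}\chi(h)\big|$, the $L_1$ distance between the distributions $P_H(\chi)=\frac{d_\chi}{|G|}\sum_{h\in H}\chi(h)$ and $P_{\{e\}}$ on $\mathrm{Irr}(G)$. *)

theory Defs
  imports "HOL-Algebra.Group" "Jordan_Normal_Form.Matrix"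
begin

definition is_rep :: "('a, 'b) monoid_scheme \<Rightarrow> nat \<Rightarrow> ('a \<Rightarrow> complex mat) \<Rightarrow> bool" where
  "is_rep G n \<rho> \<longleftrightarrow> n > 0
     \<and> (\<forall>g \<in> carrier G. \<rho> g \<in> carrier_mat n n)
     \<and> (\<forall>g \<in> carrier G. \<forall>h \<in> carrier G. \<rho> (g \<otimes>\<^bsub>G\<^esub> h) = \<rho> g * \<rho> h)
     \<and> \<rho> \<one>\<^bsub>G\<^esub> = 1\<^sub>m n"

definition is_subspace :: "nat \<Rightarrow> complex vec set \<Rightarrow> bool" where
  "is_subspace n W \<longleftrightarrow> W \<subseteq> carrier_vec n \<and> 0\<^sub>v n \<in> W
     \<and> (\<forall>v \<in> W. \<forall>w \<in> W. v + w \<in> W)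
     \<and> (\<forall>c::complex. \<forall>w \<in> W. c \<cdot>\<^sub>v w \<in> W)"

definition irreducible_rep :: "('a, 'b) monoid_scheme \<Rightarrow> nat \<Rightarrow> ('a \<Rightarrow> complex mat) \<Rightarrow> bool" where
  "irreducible_rep G n \<rho> \<longleftrightarrow> is_rep G n \<rho>
     \<and> (\<forall>W. is_subspace n W \<and> (\<forall>g \<in> carrier G. \<forall>w \<in> W. \<rho> g *\<^sub>v w \<in> W)
            \<longrightarrow> W = {0\<^sub>v n} \<or> W = carrier_vec n)"

definition mat_trace :: "complex mat \<Rightarrow> complex" where
  "mat_trace A = (\<Sum>i < dim_row A. A $$ (i, i))"

definition Irr :: "('a, 'b) monoid_scheme \<Rightarrow> ('a \<Rightarrow> complex) set" where
  "Irr G = {\<chi>. \<exists>n \<rho>. irreducible_rep G n \<rho>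
      \<and> \<chi> = (\<lambda>g. if g \<in> carrier G then mat_trace (\<rho> g) else 0)}"

definition conj_class :: "('a, 'b) monoid_scheme \<Rightarrow> 'a \<Rightarrow> 'a set" where
  "conj_class G x = {inv\<^bsub>G\<^esub> g \<otimes>\<^bsub>G\<^esub> x \<otimes>\<^bsub>G\<^esub> g | g. g \<in> carrier G}"

definition D :: "('a, 'b) monoid_scheme \<Rightarrow> 'a set \<Rightarrow> real" where
  "D G H = (1 / real (card (carrier G))) *
     (\<Sum>\<chi> \<in> Irr G. Re (\<chi> \<one>\<^bsub>G\<^esub>) * cmod (\<Sum>h \<in> H - {\<one>\<^bsub>G\<^esub>}. \<chi> h))"

end

theory Submission
  imports Defs "Jordan_Normal_Form.Determinant" "Jordan_Normal_Form.Spectral_Radius"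
    "Jordan_Normal_Form.Schur_Decomposition" "HOL-Algebra.Multiplicative_Group"
begin

lemma mat_trace_alt: "A \<in> carrier_mat n n \<Longrightarrow> mat_trace A = (\<Sum>i<n. A $$ (i,i))"
  unfolding mat_trace_def by auto

lemma mat_trace_comm:
  assumes A: "A \<in> carrier_mat n m" and B: "B \<in> carrier_mat m n"
  shows "mat_trace (A * B) = mat_trace (B * A)"
proof -
  have "mat_trace (A * B) = (\<Sum>i<n. \<Sum>j<m. A $$ (i,j) * B $$ (j,i))"
    unfolding mat_trace_def using A B
    by (auto simp: scalar_prod_def intro!: sum.cong sum.reindex_bij_witness[of _ id id])
  also have "\<dots> = (\<Sum>j<m. \<Sum>i<n. B $$ (j,i) * A $$ (i,j))"
    by (subst sum.swap) (simp add: mult.commute)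
  also have "\<dots> = mat_trace (B * A)"
    unfolding mat_trace_def using A B
    by (auto simp: scalar_prod_def intro!: sum.cong sum.reindex_bij_witness[of _ id id])
  finally show ?thesis .
qed

lemma mat_trace_one[simp]: "mat_trace (1\<^sub>m n) = of_nat n"
  unfolding mat_trace_def by simp

lemma mat_trace_similar:
  assumes A: "A \<in> carrier_mat n n" and P: "P \<in> carrier_mat n n" and Q: "Q \<in> carrier_mat n n"
    and QP: "Q * P = 1\<^sub>m n"
  shows "mat_trace (P * A * Q) = mat_trace A"
proof -
  have "mat_trace (P * A * Q) = mat_trace (Q * (P * A))"
    by (rule mat_trace_comm[of _ n n], insert A P Q, auto)
  also have "Q * (P * A) = (Q * P) * A" using A P Q by (simp add: assoc_mult_mat)
  also have "\<dots> = A" using QP A by simp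
  finally show ?thesis .
qed

definition injm :: "complex mat \<Rightarrow> bool" where
  "injm M \<longleftrightarrow> (\<forall>c \<in> carrier_vec (dim_col M). M *\<^sub>v c = 0\<^sub>v (dim_row M) \<longrightarrow> c = 0\<^sub>v (dim_col M))"

lemma injm_le:
  assumes M: "M \<in> carrier_mat m k" and inj: "injm M"
  shows "k \<le> m"
proof (rule ccontr)
  assume "\<not> k \<le> m"
  hence km: "m < k" by auto
  define M' where "M' = mat k k (\<lambda>(i,j). if i < m then M $$ (i,j) else 0)"
  have M': "M' \<in> carrier_mat k k" unfolding M'_def by auto
  have "det M' \<noteq> 0"
  proof
    assume "det M' = 0"
    then obtain v where v: "v \<in> carrier_vec k" "v \<noteq> 0\<^sub>v k" "M' *\<^sub>v v = 0\<^sub>v k"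
      using det_0_iff_vec_prod_zero[OF M'] by auto
    have "M *\<^sub>v v = 0\<^sub>v m"
    proof (rule eq_vecI)
      fix i assume "i < dim_vec (0\<^sub>v m :: complex vec)"
      hence i: "i < m" by auto
      have "(M' *\<^sub>v v) $ i = 0" using v(3) i km by simp
      moreover have "(M' *\<^sub>v v) $ i = (M *\<^sub>v v) $ i"
        using i km M v(1) unfolding M'_def by (auto simp: scalar_prod_def row_def)
      ultimately show "(M *\<^sub>v v) $ i = 0\<^sub>v m $ i" using i by simp
    qed (use M in auto)
    hence "v = 0\<^sub>v k" using inj v(1) M unfolding injm_def by auto
    with v(2) show False by auto
  qed
  moreover have "det M' = 0"
  proof -
    have T: "transpose_mat M' \<in> carrier_mat k k" using M' by auto
    have "transpose_mat M' *\<^sub>v unit_vec k (k - 1) = 0\<^sub>v k"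
    proof (rule eq_vecI)
      fix i assume "i < dim_vec (0\<^sub>v k :: complex vec)"
      hence i: "i < k" by auto
      have "(transpose_mat M' *\<^sub>v unit_vec k (k - 1)) $ i = row (transpose_mat M') i $ (k - 1)"
        using i km T by (subst index_mult_mat_vec) (auto intro!: scalar_prod_right_unit)
      also have "\<dots> = 0" using i km unfolding M'_def by auto
      finally show "(transpose_mat M' *\<^sub>v unit_vec k (k - 1)) $ i = 0\<^sub>v k $ i" using i by simp
    qed (use M' in auto)
    moreover have "unit_vec k (k - 1) \<noteq> (0\<^sub>v k :: complex vec)" using km
      by (metis One_nat_def diff_less index_unit_vec(1) index_zero_vec(1) less_nat_zero_code not_gr_zero zero_neq_one)
    ultimately have "det (transpose_mat M') = 0"
      using det_0_iff_vec_prod_zero[OF T] by (meson unit_vec_carrier)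
    thus ?thesis using det_transpose[OF M'] by simp
  qed
  ultimately show False by simp
qed


definition inspan :: "nat \<Rightarrow> complex vec list \<Rightarrow> complex vec \<Rightarrow> bool" where
  "inspan m bs v \<longleftrightarrow> (\<exists>c \<in> carrier_vec (length bs). v = mat_of_cols m bs *\<^sub>v c)"

lemma mat_of_cols_mult_vec_index:
  assumes "i < m" "c \<in> carrier_vec (length ws)"
  shows "(mat_of_cols m ws *\<^sub>v c) $ i = (\<Sum>j<length ws. ws ! j $ i * c $ j)"
  using assms by (auto simp: scalar_prod_def row_def mat_of_cols_index lessThan_atLeast0 intro!: sum.cong)

lemma mat_of_cols_snoc_mult:
  fixes bs :: "complex vec list"
  assumes c: "c \<in> carrier_vec (Suc (length bs))"
  shows "mat_of_cols m (bs @ [u]) *\<^sub>v c =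
     mat_of_cols m bs *\<^sub>v vec (length bs) (\<lambda>i. c $ i) + c $ (length bs) \<cdot>\<^sub>v vec m (\<lambda>i. u $ i)"
proof (rule eq_vecI)
  fix i assume "i < dim_vec (mat_of_cols m bs *\<^sub>v vec (length bs) (\<lambda>i. c $ i) + c $ (length bs) \<cdot>\<^sub>v vec m (\<lambda>i. u $ i))"
  hence i: "i < m" by auto
  have "(mat_of_cols m (bs @ [u]) *\<^sub>v c) $ i = (\<Sum>j<Suc (length bs). (bs @ [u]) ! j $ i * c $ j)"
    using mat_of_cols_mult_vec_index[OF i, of c "bs @ [u]"] c by simp
  also have "\<dots> = (\<Sum>j<length bs. bs ! j $ i * c $ j) + u $ i * c $ length bs"
    by (simp add: nth_append)
  also have "(\<Sum>j<length bs. bs ! j $ i * c $ j) = (mat_of_cols m bs *\<^sub>v vec (length bs) (\<lambda>i. c $ i)) $ i"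
    by (subst mat_of_cols_mult_vec_index[OF i]) auto
  finally show "(mat_of_cols m (bs @ [u]) *\<^sub>v c) $ i = (mat_of_cols m bs *\<^sub>v vec (length bs) (\<lambda>i. c $ i) + c $ (length bs) \<cdot>\<^sub>v vec m (\<lambda>i. u $ i)) $ i"
    using i mult.commute[of "u $ i" "c $ length bs"] by simp
qed auto

lemma injm_snoc:
  assumes bs: "set bs \<subseteq> carrier_vec m" and u: "u \<in> carrier_vec m"
    and inj: "injm (mat_of_cols m bs)" and nsp: "\<not> inspan m bs u"
  shows "injm (mat_of_cols m (bs @ [u]))"
  unfolding injm_def
proof (intro ballI impI)
  fix c :: "complex vec"
  assume c: "c \<in> carrier_vec (dim_col (mat_of_cols m (bs @ [u])))"
    and z: "mat_of_cols m (bs @ [u]) *\<^sub>v c = 0\<^sub>v (dim_row (mat_of_cols m (bs @ [u])))"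
  let ?L = "length bs"
  let ?c0 = "vec ?L (\<lambda>i. c $ i)"
  let ?a = "c $ ?L"
  have c': "c \<in> carrier_vec (Suc ?L)" using c by auto
  have uu: "vec m (\<lambda>i. u $ i) = u" using u by auto
  have eq: "mat_of_cols m bs *\<^sub>v ?c0 + ?a \<cdot>\<^sub>v u = 0\<^sub>v m"
    using z mat_of_cols_snoc_mult[OF c', of m u] uu by simp
  have a0: "?a = 0"
  proof (rule ccontr)
    assume a: "?a \<noteq> 0"
    have "u = mat_of_cols m bs *\<^sub>v ((- 1 / ?a) \<cdot>\<^sub>v ?c0)"
    proof (rule eq_vecI)
      fix i assume "i < dim_vec (mat_of_cols m bs *\<^sub>v ((- 1 / ?a) \<cdot>\<^sub>v ?c0))"
      hence i: "i < m" by auto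
      have "(mat_of_cols m bs *\<^sub>v ?c0) $ i + ?a * u $ i = 0"
        using arg_cong[OF eq, of "\<lambda>v. v $ i"] i u by simp
      hence h1: "?a * u $ i = - (mat_of_cols m bs *\<^sub>v ?c0) $ i"
        by (simp add: eq_neg_iff_add_eq_0 add.commute)
      have "(mat_of_cols m bs *\<^sub>v ((- 1 / ?a) \<cdot>\<^sub>v ?c0)) $ i = (- 1 / ?a) * (mat_of_cols m bs *\<^sub>v ?c0) $ i"
        using i by (simp add: mat_of_cols_mult_vec_index sum_distrib_left ac_simps)
      hence h2: "?a * (mat_of_cols m bs *\<^sub>v ((- 1 / ?a) \<cdot>\<^sub>v ?c0)) $ i = - (mat_of_cols m bs *\<^sub>v ?c0) $ i"
        using a by simp
      have "?a * u $ i = ?a * (mat_of_cols m bs *\<^sub>v ((- 1 / ?a) \<cdot>\<^sub>v ?c0)) $ i"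
        using h1 h2 by simp
      thus "u $ i = (mat_of_cols m bs *\<^sub>v ((- 1 / ?a) \<cdot>\<^sub>v ?c0)) $ i"
        using a by simp
    qed (use u in auto)
    hence "inspan m bs u" unfolding inspan_def by (intro bexI[of _ "(- 1 / ?a) \<cdot>\<^sub>v ?c0"]) auto
    with nsp show False by simp
  qed
  have cm: "mat_of_cols m bs *\<^sub>v ?c0 \<in> carrier_vec m" by (rule mult_mat_vec_carrier) auto
  hence "mat_of_cols m bs *\<^sub>v ?c0 = 0\<^sub>v m" 
  proof -
    have "0 \<cdot>\<^sub>v u = (0\<^sub>v m :: complex vec)" using u by (intro eq_vecI) auto
    thus ?thesis using eq a0 cm by simp
  qed
  hence c0: "?c0 = 0\<^sub>v ?L" using inj unfolding injm_def by auto
  show "c = 0\<^sub>v (dim_col (mat_of_cols m (bs @ [u])))"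
  proof (rule eq_vecI)
    fix i assume "i < dim_vec (0\<^sub>v (dim_col (mat_of_cols m (bs @ [u]))) :: complex vec)"
    hence i: "i < Suc ?L" by auto
    show "c $ i = 0\<^sub>v (dim_col (mat_of_cols m (bs @ [u]))) $ i"
    proof (cases "i = ?L")
      case True thus ?thesis using a0 i by simp
    next
      case False
      hence "i < ?L" using i by auto
      thus ?thesis using arg_cong[OF c0, of "\<lambda>v. v $ i"] i by simp
    qed
  qed (use c in auto)
qed

lemma extend_basis:
  assumes "U \<subseteq> carrier_vec m" "set bs \<subseteq> U" "injm (mat_of_cols m bs)"
  shows "\<exists>cs. set cs \<subseteq> U \<and> injm (mat_of_cols m (bs @ cs)) \<and> (\<forall>u \<in> U. inspan m (bs @ cs) u)"
  using assms
proof (induction "m - length bs" arbitrary: bs rule: less_induct)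
  case less
  show ?case
  proof (cases "\<forall>u \<in> U. inspan m bs u")
    case True thus ?thesis using less.prems by (intro exI[of _ "[]"]) auto
  next
    case False
    then obtain u where u: "u \<in> U" "\<not> inspan m bs u" by auto
    have inj': "injm (mat_of_cols m (bs @ [u]))"
      by (rule injm_snoc) (use less.prems u in auto)
    have "length (bs @ [u]) \<le> m" by (rule injm_le[OF _ inj']) auto
    hence lt: "m - length (bs @ [u]) < m - length bs" by auto
    from less.hyps[OF lt less.prems(1) _ inj'] u less.prems
    obtain cs where "set cs \<subseteq> U" "injm (mat_of_cols m ((bs @ [u]) @ cs))" "\<forall>v \<in> U. inspan m ((bs @ [u]) @ cs) v"
      by auto
    thus ?thesis using u(1) by (intro exI[of _ "u # cs"]) auto
  qed
qed

lemma inspan_subspace: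
  assumes U: "is_subspace m U" and bs: "set bs \<subseteq> U" and sp: "inspan m bs v"
  shows "v \<in> U"
  using bs sp
proof (induction bs arbitrary: v rule: rev_induct)
  case Nil
  then obtain c where "c \<in> carrier_vec 0" "v = mat_of_cols m [] *\<^sub>v c" unfolding inspan_def by auto
  hence "v = 0\<^sub>v m" by (intro eq_vecI) (auto simp: scalar_prod_def)
  thus ?case using U unfolding is_subspace_def by auto
next
  case (snoc u bs)
  from snoc.prems obtain c where c: "c \<in> carrier_vec (Suc (length bs))" "v = mat_of_cols m (bs @ [u]) *\<^sub>v c"
    unfolding inspan_def by auto
  have Um: "U \<subseteq> carrier_vec m" using U unfolding is_subspace_def by auto
  have uU: "u \<in> U" using snoc.prems by auto
  hence um: "u \<in> carrier_vec m" using Um by auto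
  have "vec m (\<lambda>i. u $ i) = u" using um by auto
  hence v: "v = mat_of_cols m bs *\<^sub>v vec (length bs) (\<lambda>i. c $ i) + c $ (length bs) \<cdot>\<^sub>v u"
    using mat_of_cols_snoc_mult[OF c(1), of m u] c(2) by simp
  have "mat_of_cols m bs *\<^sub>v vec (length bs) (\<lambda>i. c $ i) \<in> U"
    by (rule snoc.IH) (use snoc.prems in \<open>auto simp: inspan_def\<close>)
  moreover have "c $ (length bs) \<cdot>\<^sub>v u \<in> U" using U uU unfolding is_subspace_def by auto
  ultimately show ?case using U v unfolding is_subspace_def by auto
qed

lemma upper_triangular_mult_diag:
  fixes X Y :: "complex mat"
  assumes X: "X \<in> carrier_mat n n" and Y: "Y \<in> carrier_mat n n"
    and uX: "upper_triangular X" and uY: "upper_triangular Y"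
  shows "upper_triangular (X * Y)" "\<And>i. i < n \<Longrightarrow> (X * Y) $$ (i,i) = X $$ (i,i) * Y $$ (i,i)"
proof -
  show "upper_triangular (X * Y)"
  proof (rule upper_triangularI)
    fix i j assume ji: "j < i" and i: "i < dim_row (X * Y)"
    have "(X * Y) $$ (i,j) = (\<Sum>l<n. X $$ (i,l) * Y $$ (l,j))"
      using X Y i ji by (auto simp: scalar_prod_def lessThan_atLeast0 intro!: sum.cong)
    also have "\<dots> = 0"
    proof (rule sum.neutral, intro ballI)
      fix l assume l: "l \<in> {..<n}"
      show "X $$ (i,l) * Y $$ (l,j) = 0"
      proof (cases "l < i")
        case True thus ?thesis using upper_triangularD[OF uX True] X i by auto
      next
        case False hence "j < l" using ji by auto
        thus ?thesis using upper_triangularD[OF uY \<open>j < l\<close>] Y l by auto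
      qed
    qed
    finally show "(X * Y) $$ (i,j) = 0" .
  qed
  fix i assume i: "i < n"
  have "(X * Y) $$ (i,i) = (\<Sum>l<n. X $$ (i,l) * Y $$ (l,i))"
    using X Y i by (auto simp: scalar_prod_def lessThan_atLeast0 intro!: sum.cong)
  also have "\<dots> = X $$ (i,i) * Y $$ (i,i) + (\<Sum>l\<in>{..<n} - {i}. X $$ (i,l) * Y $$ (l,i))"
    by (rule sum.remove) (use i in auto)
  also have "(\<Sum>l\<in>{..<n} - {i}. X $$ (i,l) * Y $$ (l,i)) = 0"
  proof (rule sum.neutral, intro ballI)
    fix l assume l: "l \<in> {..<n} - {i}"
    show "X $$ (i,l) * Y $$ (l,i) = 0"
    proof (cases "l < i")
      case True thus ?thesis using upper_triangularD[OF uX True] X i by auto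
    next
      case False hence "i < l" using l by auto
      thus ?thesis using upper_triangularD[OF uY \<open>i < l\<close>] Y l by auto
    qed
  qed
  finally show "(X * Y) $$ (i,i) = X $$ (i,i) * Y $$ (i,i)" by simp
qed

lemma upper_triangular_pow_diag:
  fixes B :: "complex mat"
  assumes B: "B \<in> carrier_mat n n" and uB: "upper_triangular B"
  shows "upper_triangular (B ^\<^sub>m k) \<and> (\<forall>i<n. (B ^\<^sub>m k) $$ (i,i) = B $$ (i,i) ^ k)"
proof (induction k)
  case 0 thus ?case using B by auto
next
  case (Suc k)
  have Bk: "B ^\<^sub>m k \<in> carrier_mat n n" using B by auto
  show ?case using upper_triangular_mult_diag[OF Bk B] Suc uB by (auto simp: mult.commute)
qed

lemma root_unity_trace:
  fixes A :: "complex mat"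
  assumes A: "A \<in> carrier_mat n n" and k: "k > 0" and Ak: "A ^\<^sub>m k = 1\<^sub>m n"
  shows "cmod (mat_trace A) \<le> real n" "mat_trace (A ^\<^sub>m (k - 1)) = cnj (mat_trace A)"
proof -
  obtain es where es: "char_poly A = (\<Prod>a\<leftarrow>es. [:- a, 1:])" using char_poly_factorized[OF A] by auto
  define B where "B = schur_upper_triangular A es"
  have B: "B \<in> carrier_mat n n" "upper_triangular B" "similar_mat A B"
    using schur_upper_triangular[OF A es] unfolding B_def by auto
  then obtain P Q where wit: "similar_mat_wit A B P Q" unfolding similar_mat_def by auto
  hence PQ: "P \<in> carrier_mat n n" "Q \<in> carrier_mat n n" "P * Q = 1\<^sub>m n" "Q * P = 1\<^sub>m n" "A = P * B * Q"
    using A unfolding similar_mat_wit_def Let_def by auto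
  have pw: "\<And>j. A ^\<^sub>m j = P * B ^\<^sub>m j * Q" using similar_mat_wit_pow_id[OF wit] .
  have trj: "\<And>j. mat_trace (A ^\<^sub>m j) = (\<Sum>i<n. B $$ (i,i) ^ j)"
  proof -
    fix j
    have "mat_trace (A ^\<^sub>m j) = mat_trace (B ^\<^sub>m j)"
      unfolding pw by (rule mat_trace_similar[of _ n]) (use B PQ in auto)
    also have "\<dots> = (\<Sum>i<n. B $$ (i,i) ^ j)"
      using upper_triangular_pow_diag[OF B(1,2), of j] B(1) by (subst mat_trace_alt[of _ n]) auto
    finally show "mat_trace (A ^\<^sub>m j) = (\<Sum>i<n. B $$ (i,i) ^ j)" .
  qed
  have "B ^\<^sub>m k = Q * A ^\<^sub>m k * P"
  proof -
    have Bk: "B ^\<^sub>m k \<in> carrier_mat n n" using B by auto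
    have "Q * A ^\<^sub>m k * P = Q * (P * B ^\<^sub>m k * Q) * P" unfolding pw ..
    also have "\<dots> = Q * (P * B ^\<^sub>m k) * Q * P"
      using PQ Bk by (simp add: assoc_mult_mat[of _ n n _ n _ n])
    also have "Q * (P * B ^\<^sub>m k) = (Q * P) * B ^\<^sub>m k"
      by (rule assoc_mult_mat[symmetric, OF PQ(2) PQ(1) Bk])
    also have "\<dots> = B ^\<^sub>m k" using PQ Bk by (simp add: left_mult_one_mat)
    also have "B ^\<^sub>m k * Q * P = B ^\<^sub>m k * (Q * P)"
      using PQ Bk by (simp add: assoc_mult_mat[of _ n n _ n _ n])
    also have "\<dots> = B ^\<^sub>m k" using PQ Bk by (simp add: right_mult_one_mat)
    finally show ?thesis by simp
  qed
  also have "\<dots> = 1\<^sub>m n" using Ak PQ by simp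
  finally have Bk: "B ^\<^sub>m k = 1\<^sub>m n" .
  have unit: "\<And>i. i < n \<Longrightarrow> B $$ (i,i) ^ k = 1"
    using upper_triangular_pow_diag[OF B(1,2), of k] Bk by auto
  have norm1: "\<And>i. i < n \<Longrightarrow> cmod (B $$ (i,i)) = 1"
  proof -
    fix i assume i: "i < n"
    have "cmod (B $$ (i,i)) ^ k = 1" using unit[OF i] by (metis norm_one norm_power)
    hence "cmod (B $$ (i,i)) ^ k = 1 ^ k" by simp
    thus "cmod (B $$ (i,i)) = 1" using power_eq_imp_eq_base[of "cmod (B $$ (i,i))" k 1] k by simp
  qed
  have "mat_trace A = (\<Sum>i<n. B $$ (i,i))" using trj[of 1] by simp
  hence "cmod (mat_trace A) \<le> (\<Sum>i<n. cmod (B $$ (i,i)))" by (simp add: sum_norm_le)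
  also have "\<dots> = real n" using norm1 by simp
  finally show "cmod (mat_trace A) \<le> real n" .
  have "\<And>i. i < n \<Longrightarrow> B $$ (i,i) ^ (k - 1) = cnj (B $$ (i,i))"
  proof -
    fix i assume i: "i < n"
    have "B $$ (i,i) * B $$ (i,i) ^ (k - 1) = 1" using unit[OF i] k
      by (metis Suc_diff_1 power_Suc)
    moreover have "B $$ (i,i) * cnj (B $$ (i,i)) = 1"
      using norm1[OF i] by (metis complex_norm_square mult.commute of_real_1 power_one)
    moreover have "B $$ (i,i) \<noteq> 0" using norm1[OF i] by auto
    ultimately show "B $$ (i,i) ^ (k - 1) = cnj (B $$ (i,i))"
      by (metis mult_left_cancel)
  qed
  hence "mat_trace (A ^\<^sub>m (k - 1)) = (\<Sum>i<n. cnj (B $$ (i,i)))" using trj[of "k - 1"] by simp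
  also have "\<dots> = cnj (mat_trace A)" using trj[of 1] by simp
  finally show "mat_trace (A ^\<^sub>m (k - 1)) = cnj (mat_trace A)" .
qed

context group
begin

lemma rep_carrier: "is_rep G n \<rho> \<Longrightarrow> g \<in> carrier G \<Longrightarrow> \<rho> g \<in> carrier_mat n n"
  unfolding is_rep_def by auto

lemma rep_mult: "is_rep G n \<rho> \<Longrightarrow> g \<in> carrier G \<Longrightarrow> h \<in> carrier G \<Longrightarrow> \<rho> (g \<otimes> h) = \<rho> g * \<rho> h"
  unfolding is_rep_def by auto

lemma rep_one: "is_rep G n \<rho> \<Longrightarrow> \<rho> \<one> = 1\<^sub>m n"
  unfolding is_rep_def by auto

lemma rep_pos: "is_rep G n \<rho> \<Longrightarrow> n > 0"
  unfolding is_rep_def by auto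

lemma rep_inv_l: "is_rep G n \<rho> \<Longrightarrow> g \<in> carrier G \<Longrightarrow> \<rho> (inv g) * \<rho> g = 1\<^sub>m n"
  by (metis rep_mult rep_one inv_closed l_inv)

lemma rep_inv_r: "is_rep G n \<rho> \<Longrightarrow> g \<in> carrier G \<Longrightarrow> \<rho> g * \<rho> (inv g) = 1\<^sub>m n"
  by (metis rep_mult rep_one inv_closed r_inv)

lemma rep_pow: "is_rep G n \<rho> \<Longrightarrow> g \<in> carrier G \<Longrightarrow> \<rho> (g [^] (k::nat)) = \<rho> g ^\<^sub>m k"
proof (induction k)
  case 0 thus ?case using rep_carrier[OF 0] by (simp add: rep_one)
next
  case (Suc k) thus ?case by (simp add: rep_mult)
qed

lemma rep_class:
  assumes r: "is_rep G n \<rho>" and g: "g \<in> carrier G" and h: "h \<in> carrier G"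
  shows "mat_trace (\<rho> (inv h \<otimes> g \<otimes> h)) = mat_trace (\<rho> g)"
proof -
  have "\<rho> (inv h \<otimes> g \<otimes> h) = \<rho> (inv h) * \<rho> g * \<rho> h" using r g h by (simp add: rep_mult)
  hence "mat_trace (\<rho> (inv h \<otimes> g \<otimes> h)) = mat_trace (\<rho> (inv h) * \<rho> g * \<rho> h)" by simp
  also have "\<dots> = mat_trace (\<rho> g)"
    by (rule mat_trace_similar[of _ n]) (use r g h rep_carrier rep_inv_r in auto)
  finally show ?thesis .
qed

lemma rep_char_bound:
  assumes fin: "finite (carrier G)" and r: "is_rep G n \<rho>" and g: "g \<in> carrier G"
  shows "cmod (mat_trace (\<rho> g)) \<le> real n" "mat_trace (\<rho> (inv g)) = cnj (mat_trace (\<rho> g))"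
proof -
  define k where "k = ord g"
  have k: "k \<ge> 1" unfolding k_def using ord_ge_1[OF fin g] .
  have gk: "g [^] k = \<one>" unfolding k_def using g by simp
  have A: "\<rho> g \<in> carrier_mat n n" using r g by (rule rep_carrier)
  have Ak: "\<rho> g ^\<^sub>m k = 1\<^sub>m n" using rep_pow[OF r g, of k] gk rep_one[OF r] by simp
  have kpos: "k > 0" using k by auto
  show "cmod (mat_trace (\<rho> g)) \<le> real n" using root_unity_trace(1)[OF A kpos Ak] .
  have "g \<otimes> g [^] (k - 1) = \<one>"
    using gk g k by (metis Suc_diff_1 kpos nat_pow_Suc2)
  hence "inv g = g [^] (k - 1)" using g by (metis inv_equality inv_inv inv_closed nat_pow_closed inv_unique' r_inv)
  hence "\<rho> (inv g) = \<rho> g ^\<^sub>m (k - 1)" using rep_pow[OF r g] by simp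
  thus "mat_trace (\<rho> (inv g)) = cnj (mat_trace (\<rho> g))" using root_unity_trace(2)[OF A kpos Ak] by simp
qed

end

lemma mat_eq_by_cols:
  fixes A B :: "complex mat"
  assumes A: "A \<in> carrier_mat n m" and B: "B \<in> carrier_mat n m"
    and c: "\<And>j. j < m \<Longrightarrow> A *\<^sub>v unit_vec m j = B *\<^sub>v unit_vec m j"
  shows "A = B"
proof (rule eq_matI)
  fix i j assume i: "i < dim_row B" and j: "j < dim_col B"
  have "A $$ (i,j) = (A *\<^sub>v unit_vec m j) $ i" using A B i j by simp
  also have "\<dots> = (B *\<^sub>v unit_vec m j) $ i" using c j B by simp
  also have "\<dots> = B $$ (i,j)" using B i j by simp
  finally show "A $$ (i,j) = B $$ (i,j)" .
qed (use A B in auto)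

lemma zero_if_all_zero:
  fixes T :: "complex mat"
  assumes T: "T \<in> carrier_mat n m" and z: "\<And>v. v \<in> carrier_vec m \<Longrightarrow> T *\<^sub>v v = 0\<^sub>v n"
  shows "T = 0\<^sub>m n m"
  by (rule mat_eq_by_cols[OF T]) (use z T in auto)

context group
begin

lemma schur_scalar:
  assumes r: "irreducible_rep G n \<rho>" and T: "T \<in> carrier_mat n n"
    and comm: "\<And>g. g \<in> carrier G \<Longrightarrow> \<rho> g * T = T * \<rho> g"
  shows "\<exists>c. T = c \<cdot>\<^sub>m 1\<^sub>m n"
proof -
  have isr: "is_rep G n \<rho>" using r unfolding irreducible_rep_def by auto
  have n: "n > 0" using rep_pos[OF isr] .
  obtain lam where "lam \<in> spectrum T" using spectrum_non_empty[OF T n] by auto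
  hence "eigenvalue T lam" unfolding spectrum_def by auto
  then obtain v where v: "v \<in> carrier_vec n" "v \<noteq> 0\<^sub>v n" "T *\<^sub>v v = lam \<cdot>\<^sub>v v"
    unfolding eigenvalue_def eigenvector_def using T by auto
  define K where "K = {w \<in> carrier_vec n. T *\<^sub>v w = lam \<cdot>\<^sub>v w}"
  have sub: "is_subspace n K" unfolding is_subspace_def K_def
    using T by (auto simp: mult_add_distrib_mat_vec mult_mat_vec smult_add_distrib_vec smult_smult_assoc mult.commute)
  have inv: "\<forall>g \<in> carrier G. \<forall>w \<in> K. \<rho> g *\<^sub>v w \<in> K"
  proof (intro ballI)
    fix g w assume g: "g \<in> carrier G" and w: "w \<in> K"
    have rg: "\<rho> g \<in> carrier_mat n n" using rep_carrier[OF isr g] .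
    have "T *\<^sub>v (\<rho> g *\<^sub>v w) = (T * \<rho> g) *\<^sub>v w" using T rg w unfolding K_def by auto
    also have "\<dots> = (\<rho> g * T) *\<^sub>v w" using comm[OF g] by simp
    also have "\<dots> = \<rho> g *\<^sub>v (T *\<^sub>v w)" using T rg w unfolding K_def by auto
    also have "\<dots> = lam \<cdot>\<^sub>v (\<rho> g *\<^sub>v w)" using w rg unfolding K_def by (auto simp: mult_mat_vec)
    finally show "\<rho> g *\<^sub>v w \<in> K" using rg w unfolding K_def by auto
  qed
  have "K = {0\<^sub>v n} \<or> K = carrier_vec n" using r sub inv unfolding irreducible_rep_def by blast
  moreover have "v \<in> K" using v unfolding K_def by auto
  ultimately have K: "K = carrier_vec n" using v by auto
  have "T = lam \<cdot>\<^sub>m 1\<^sub>m n"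
  proof (rule mat_eq_by_cols[OF T])
    fix j assume j: "j < n"
    have "unit_vec n j \<in> K" using K by auto
    hence "T *\<^sub>v unit_vec n j = lam \<cdot>\<^sub>v unit_vec n j" unfolding K_def by auto
    also have "\<dots> = (lam \<cdot>\<^sub>m 1\<^sub>m n) *\<^sub>v unit_vec n j"
      by (intro eq_vecI) (use j in auto)
    finally show "T *\<^sub>v unit_vec n j = (lam \<cdot>\<^sub>m 1\<^sub>m n) *\<^sub>v unit_vec n j" .
  qed auto
  thus ?thesis by auto
qed

lemma schur_equiv:
  assumes r: "irreducible_rep G n \<rho>" and s: "irreducible_rep G m \<sigma>"
    and T: "T \<in> carrier_mat n m"
    and comm: "\<And>g. g \<in> carrier G \<Longrightarrow> \<rho> g * T = T * \<sigma> g"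
    and nz: "T \<noteq> 0\<^sub>m n m"
  shows "n = m \<and> (\<forall>g \<in> carrier G. mat_trace (\<rho> g) = mat_trace (\<sigma> g))"
proof -
  have isr: "is_rep G n \<rho>" using r unfolding irreducible_rep_def by auto
  have iss: "is_rep G m \<sigma>" using s unfolding irreducible_rep_def by auto
  define K where "K = {w \<in> carrier_vec m. T *\<^sub>v w = 0\<^sub>v n}"
  have subK: "is_subspace m K" unfolding is_subspace_def K_def
    using T by (auto simp: mult_add_distrib_mat_vec mult_mat_vec)
  have invK: "\<forall>g \<in> carrier G. \<forall>w \<in> K. \<sigma> g *\<^sub>v w \<in> K"
  proof (intro ballI)
    fix g w assume g: "g \<in> carrier G" and w: "w \<in> K"
    have rg: "\<rho> g \<in> carrier_mat n n" using rep_carrier[OF isr g] .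
    have sg: "\<sigma> g \<in> carrier_mat m m" using rep_carrier[OF iss g] .
    have "T *\<^sub>v (\<sigma> g *\<^sub>v w) = (T * \<sigma> g) *\<^sub>v w" using T sg w unfolding K_def by auto
    also have "\<dots> = (\<rho> g * T) *\<^sub>v w" using comm[OF g] by simp
    also have "\<dots> = \<rho> g *\<^sub>v (T *\<^sub>v w)" using T rg w unfolding K_def by auto
    also have "\<dots> = 0\<^sub>v n" using w rg unfolding K_def by auto
    finally show "\<sigma> g *\<^sub>v w \<in> K" using sg w unfolding K_def by auto
  qed
  have "K = {0\<^sub>v m} \<or> K = carrier_vec m" using s subK invK unfolding irreducible_rep_def by blast
  moreover have "K \<noteq> carrier_vec m"
  proof
    assume "K = carrier_vec m"
    hence "T = 0\<^sub>m n m" by (intro zero_if_all_zero[OF T]) (auto simp: K_def)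
    with nz show False by simp
  qed
  ultimately have K0: "K = {0\<^sub>v m}" by auto
  define I where "I = {T *\<^sub>v w | w. w \<in> carrier_vec m}"
  have subI: "is_subspace n I" unfolding is_subspace_def I_def
  proof (intro conjI ballI allI)
    show "{T *\<^sub>v w |w. w \<in> carrier_vec m} \<subseteq> carrier_vec n" using T by auto
    show "0\<^sub>v n \<in> {T *\<^sub>v w |w. w \<in> carrier_vec m}" using T by (intro CollectI exI[of _ "0\<^sub>v m"]) auto
  next
    fix x y assume "x \<in> {T *\<^sub>v w |w. w \<in> carrier_vec m}" "y \<in> {T *\<^sub>v w |w. w \<in> carrier_vec m}"
    then obtain a b where "x = T *\<^sub>v a" "y = T *\<^sub>v b" "a \<in> carrier_vec m" "b \<in> carrier_vec m" by auto
    thus "x + y \<in> {T *\<^sub>v w |w. w \<in> carrier_vec m}" using T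
      by (intro CollectI exI[of _ "a + b"]) (auto simp: mult_add_distrib_mat_vec)
  next
    fix c :: complex and x assume "x \<in> {T *\<^sub>v w |w. w \<in> carrier_vec m}"
    then obtain a where "x = T *\<^sub>v a" "a \<in> carrier_vec m" by auto
    thus "c \<cdot>\<^sub>v x \<in> {T *\<^sub>v w |w. w \<in> carrier_vec m}" using T
      by (intro CollectI exI[of _ "c \<cdot>\<^sub>v a"]) (auto simp: mult_mat_vec)
  qed
  have invI: "\<forall>g \<in> carrier G. \<forall>w \<in> I. \<rho> g *\<^sub>v w \<in> I"
  proof (intro ballI)
    fix g x assume g: "g \<in> carrier G" and x: "x \<in> I"
    then obtain a where a: "x = T *\<^sub>v a" "a \<in> carrier_vec m" unfolding I_def by auto
    have rg: "\<rho> g \<in> carrier_mat n n" using rep_carrier[OF isr g] .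
    have sg: "\<sigma> g \<in> carrier_mat m m" using rep_carrier[OF iss g] .
    have "\<rho> g *\<^sub>v x = (\<rho> g * T) *\<^sub>v a" using a rg T by auto
    also have "\<dots> = (T * \<sigma> g) *\<^sub>v a" using comm[OF g] by simp
    also have "\<dots> = T *\<^sub>v (\<sigma> g *\<^sub>v a)" using a sg T by auto
    finally show "\<rho> g *\<^sub>v x \<in> I" unfolding I_def using sg a by auto
  qed
  have "I = {0\<^sub>v n} \<or> I = carrier_vec n" using r subI invI unfolding irreducible_rep_def by blast
  moreover have "I \<noteq> {0\<^sub>v n}"
  proof
    assume "I = {0\<^sub>v n}"
    hence "T = 0\<^sub>m n m" by (intro zero_if_all_zero[OF T]) (auto simp: I_def)
    with nz show False by simp
  qed
  ultimately have I: "I = carrier_vec n" by auto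
  have "\<forall>i < n. \<exists>w. w \<in> carrier_vec m \<and> T *\<^sub>v w = unit_vec n i"
  proof (intro allI impI)
    fix i assume "i < n"
    have "unit_vec n i \<in> I" using I by auto
    thus "\<exists>w. w \<in> carrier_vec m \<and> T *\<^sub>v w = unit_vec n i" unfolding I_def by auto
  qed
  then obtain wf where wf: "\<And>i. i < n \<Longrightarrow> wf i \<in> carrier_vec m \<and> T *\<^sub>v wf i = unit_vec n i"
    by metis
  define R where "R = mat_of_cols m (map wf [0..<n])"
  have R: "R \<in> carrier_mat m n" unfolding R_def by auto
  have TR: "T * R = 1\<^sub>m n"
  proof (rule mat_eq_by_cols[of _ n n])
    fix j assume j: "j < n"
    have e1: "(T * R) *\<^sub>v unit_vec n j = T *\<^sub>v (R *\<^sub>v unit_vec n j)" using T R by auto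
    have e2: "R *\<^sub>v unit_vec n j = wf j"
    proof (intro eq_vecI)
      fix i assume "i < dim_vec (wf j)"
      hence i: "i < m" using wf[OF j] by auto
      show "(R *\<^sub>v unit_vec n j) $ i = wf j $ i" using R i j unfolding R_def
        by (simp add: mat_of_cols_index)
    qed (use R wf[OF j] in auto)
    show "(T * R) *\<^sub>v unit_vec n j = 1\<^sub>m n *\<^sub>v unit_vec n j" using wf[OF j] e1 e2 by simp
  qed (use T R in auto)
  have RT: "R * T = 1\<^sub>m m"
  proof (rule mat_eq_by_cols[of _ m m])
    fix j assume j: "j < m"
    let ?u = "(R * T) *\<^sub>v unit_vec m j"
    have u: "?u \<in> carrier_vec m" using R T by auto
    have a1: "?u = R *\<^sub>v (T *\<^sub>v unit_vec m j)"
      by (rule assoc_mult_mat_vec[OF R T]) simp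
    have a2: "(T * R * T) *\<^sub>v unit_vec m j = (T * R) *\<^sub>v (T *\<^sub>v unit_vec m j)"
      by (rule assoc_mult_mat_vec[of _ n n T m]) (use T R in auto)
    have a3: "(T * R) *\<^sub>v (T *\<^sub>v unit_vec m j) = T *\<^sub>v (R *\<^sub>v (T *\<^sub>v unit_vec m j))"
      by (rule assoc_mult_mat_vec[OF T R]) (use T in auto)
    have "T *\<^sub>v ?u = (T * R * T) *\<^sub>v unit_vec m j" unfolding a1 a2 a3 ..
    also have "\<dots> = T *\<^sub>v unit_vec m j" using TR T by simp
    finally have "T *\<^sub>v (?u - unit_vec m j) = 0\<^sub>v n"
      using T u by (simp add: mult_minus_distrib_mat_vec)
    hence "?u - unit_vec m j \<in> K" unfolding K_def using u by auto
    hence "?u - unit_vec m j = 0\<^sub>v m" using K0 by auto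
    hence "?u = unit_vec m j"
    proof -
      assume z: "?u - unit_vec m j = 0\<^sub>v m"
      show ?thesis
      proof (rule eq_vecI)
        fix i assume "i < dim_vec (unit_vec m j :: complex vec)"
        hence i: "i < m" by simp
        have "(?u - unit_vec m j) $ i = 0" using z i by simp
        thus "?u $ i = unit_vec m j $ i" using i u by simp
      qed (use u R in simp)
    qed
    thus "(R * T) *\<^sub>v unit_vec m j = 1\<^sub>m m *\<^sub>v unit_vec m j" by simp
  qed (use T R in auto)
  have "of_nat n = mat_trace (T * R)" using TR by simp
  also have "\<dots> = mat_trace (R * T)" by (rule mat_trace_comm[OF T R])
  also have "\<dots> = of_nat m" using RT by simp
  finally have nm: "n = m" by simp
  have "\<forall>g \<in> carrier G. mat_trace (\<rho> g) = mat_trace (\<sigma> g)"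
  proof
    fix g assume g: "g \<in> carrier G"
    have rg: "\<rho> g \<in> carrier_mat n n" using rep_carrier[OF isr g] .
    have sg: "\<sigma> g \<in> carrier_mat m m" using rep_carrier[OF iss g] .
    have "\<rho> g = \<rho> g * (T * R)" using TR rg by simp
    also have "\<dots> = (\<rho> g * T) * R" using rg T R by (simp add: assoc_mult_mat)
    also have "\<dots> = T * (\<sigma> g * R)" using comm[OF g] T sg R by (simp add: assoc_mult_mat)
    finally have "mat_trace (\<rho> g) = mat_trace (T * (\<sigma> g * R))" by simp
    also have "\<dots> = mat_trace ((\<sigma> g * R) * T)" by (rule mat_trace_comm) (use T sg R in auto)
    also have "(\<sigma> g * R) * T = \<sigma> g" using RT sg R T by (simp add: assoc_mult_mat)
    finally show "mat_trace (\<rho> g) = mat_trace (\<sigma> g)" .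
  qed
  with nm show ?thesis by simp
qed

end

definition msum :: "nat \<Rightarrow> nat \<Rightarrow> ('b \<Rightarrow> complex mat) \<Rightarrow> 'b set \<Rightarrow> complex mat" where
  "msum n m F S = mat n m (\<lambda>(i,j). \<Sum>g\<in>S. F g $$ (i,j))"

lemma msum_carrier[simp]: "msum n m F S \<in> carrier_mat n m"
  unfolding msum_def by auto

lemma msum_dim[simp]: "dim_row (msum n m F S) = n" "dim_col (msum n m F S) = m"
  unfolding msum_def by auto

lemma msum_index[simp]: "i < n \<Longrightarrow> j < m \<Longrightarrow> msum n m F S $$ (i,j) = (\<Sum>g\<in>S. F g $$ (i,j))"
  unfolding msum_def by auto

lemma msum_mult_left:
  assumes A: "A \<in> carrier_mat k n" and F: "\<And>g. g \<in> S \<Longrightarrow> F g \<in> carrier_mat n m"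
  shows "A * msum n m F S = msum k m (\<lambda>g. A * F g) S"
proof (rule eq_matI)
  fix i j assume i: "i < dim_row (msum k m (\<lambda>g. A * F g) S)" and j: "j < dim_col (msum k m (\<lambda>g. A * F g) S)"
  hence i: "i < k" and j: "j < m" by auto
  have "(A * msum n m F S) $$ (i,j) = (\<Sum>l<n. A $$ (i,l) * (\<Sum>g\<in>S. F g $$ (l,j)))"
    using A i j by (auto simp: scalar_prod_def lessThan_atLeast0 intro!: sum.cong)
  also have "\<dots> = (\<Sum>g\<in>S. \<Sum>l<n. A $$ (i,l) * F g $$ (l,j))"
    by (simp add: sum_distrib_left sum.swap[of _ S])
  also have "\<dots> = (\<Sum>g\<in>S. (A * F g) $$ (i,j))"
  proof (rule sum.cong[OF refl])
    fix g assume g: "g \<in> S"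
    have Fg: "F g \<in> carrier_mat n m" using F g .
    show "(\<Sum>l<n. A $$ (i,l) * F g $$ (l,j)) = (A * F g) $$ (i,j)"
      using A Fg i j by (auto simp: scalar_prod_def lessThan_atLeast0 intro!: sum.cong)
  qed
  finally show "(A * msum n m F S) $$ (i,j) = msum k m (\<lambda>g. A * F g) S $$ (i,j)" using i j by simp
qed (use A in auto)

lemma msum_mult_right:
  assumes A: "A \<in> carrier_mat m k" and F: "\<And>g. g \<in> S \<Longrightarrow> F g \<in> carrier_mat n m"
  shows "msum n m F S * A = msum n k (\<lambda>g. F g * A) S"
proof (rule eq_matI)
  fix i j assume i: "i < dim_row (msum n k (\<lambda>g. F g * A) S)" and j: "j < dim_col (msum n k (\<lambda>g. F g * A) S)"
  hence i: "i < n" and j: "j < k" by auto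
  have "(msum n m F S * A) $$ (i,j) = (\<Sum>l<m. (\<Sum>g\<in>S. F g $$ (i,l)) * A $$ (l,j))"
    using A i j by (auto simp: scalar_prod_def lessThan_atLeast0 intro!: sum.cong)
  also have "\<dots> = (\<Sum>g\<in>S. \<Sum>l<m. F g $$ (i,l) * A $$ (l,j))"
    by (simp add: sum_distrib_right sum.swap[of _ S])
  also have "\<dots> = (\<Sum>g\<in>S. (F g * A) $$ (i,j))"
  proof (rule sum.cong[OF refl])
    fix g assume g: "g \<in> S"
    have Fg: "F g \<in> carrier_mat n m" using F g .
    show "(\<Sum>l<m. F g $$ (i,l) * A $$ (l,j)) = (F g * A) $$ (i,j)"
      using A Fg i j by (auto simp: scalar_prod_def lessThan_atLeast0 intro!: sum.cong)
  qed
  finally show "(msum n m F S * A) $$ (i,j) = msum n k (\<lambda>g. F g * A) S $$ (i,j)" using i j by simp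
qed (use A in auto)

lemma msum_cong: "(\<And>g. g \<in> S \<Longrightarrow> F g = F' g) \<Longrightarrow> msum n m F S = msum n m F' S"
  unfolding msum_def by (auto intro!: sum.cong)

lemma msum_reindex:
  assumes "bij_betw h S S'"
  shows "msum n m F S' = msum n m (\<lambda>g. F (h g)) S"
proof -
  have "\<And>i j. (\<Sum>g\<in>S'. F g $$ (i,j)) = (\<Sum>g\<in>S. F (h g) $$ (i,j))"
  proof -
    fix i j
    show "(\<Sum>g\<in>S'. F g $$ (i,j)) = (\<Sum>g\<in>S. F (h g) $$ (i,j))"
      using sum.reindex_bij_betw[OF assms, of "\<lambda>g. F g $$ (i,j)"] by simp
  qed
  thus ?thesis unfolding msum_def by auto
qed

lemma msum_trace: assumes "\<And>g. g \<in> S \<Longrightarrow> F g \<in> carrier_mat n n"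
  shows "mat_trace (msum n n F S) = (\<Sum>g\<in>S. mat_trace (F g))"
proof -
  have "mat_trace (msum n n F S) = (\<Sum>i<n. \<Sum>g\<in>S. F g $$ (i,i))"
    unfolding mat_trace_def by simp
  also have "\<dots> = (\<Sum>g\<in>S. \<Sum>i<n. F g $$ (i,i))" by (rule sum.swap)
  also have "\<dots> = (\<Sum>g\<in>S. mat_trace (F g))"
  proof (rule sum.cong[OF refl])
    fix g assume "g \<in> S"
    hence "F g \<in> carrier_mat n n" using assms by auto
    thus "(\<Sum>i<n. F g $$ (i,i)) = mat_trace (F g)" by (simp add: mat_trace_alt)
  qed
  finally show ?thesis .
qed

definition Emat :: "nat \<Rightarrow> nat \<Rightarrow> nat \<Rightarrow> nat \<Rightarrow> complex mat" where
  "Emat n m a b = mat n m (\<lambda>(i,j). if i = a \<and> j = b then 1 else 0)"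

lemma Emat_sandwich:
  assumes A: "A \<in> carrier_mat n n" and B: "B \<in> carrier_mat m m" and a: "a < n" and b: "b < m"
    and i: "i < n" and j: "j < m"
  shows "(A * Emat n m a b * B) $$ (i,j) = A $$ (i,a) * B $$ (b,j)"
proof -
  have AE: "\<And>l. l < m \<Longrightarrow> (A * Emat n m a b) $$ (i,l) = (if l = b then A $$ (i,a) else 0)"
  proof -
    fix l assume l: "l < m"
    have "(A * Emat n m a b) $$ (i,l) = (\<Sum>k<n. A $$ (i,k) * (if k = a \<and> l = b then 1 else 0))"
      using A i l by (auto simp: Emat_def scalar_prod_def lessThan_atLeast0 intro!: sum.cong)
    also have "\<dots> = (\<Sum>k<n. if k = a then (if l = b then A $$ (i,a) else 0) else 0)"
      by (intro sum.cong) auto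
    also have "\<dots> = (if l = b then A $$ (i,a) else 0)"
      using a by simp
    finally show "(A * Emat n m a b) $$ (i,l) = (if l = b then A $$ (i,a) else 0)" .
  qed
  have "(A * Emat n m a b * B) $$ (i,j) = (\<Sum>l<m. (A * Emat n m a b) $$ (i,l) * B $$ (l,j))"
    using A B i j by (auto simp: Emat_def scalar_prod_def lessThan_atLeast0 intro!: sum.cong)
  also have "\<dots> = (\<Sum>l<m. (if l = b then A $$ (i,a) else 0) * B $$ (l,j))"
    using AE by auto
  also have "\<dots> = (\<Sum>l<m. if l = b then A $$ (i,a) * B $$ (b,j) else 0)"
    by (intro sum.cong) auto
  also have "\<dots> = A $$ (i,a) * B $$ (b,j)" using b by simp
  finally show ?thesis .
qed

lemma Emat_carrier[simp]: "Emat n m a b \<in> carrier_mat n m" unfolding Emat_def by auto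

lemma Emat_trace: "a < n \<Longrightarrow> b < n \<Longrightarrow> mat_trace (Emat n n a b) = (if a = b then 1 else 0)"
  unfolding mat_trace_def Emat_def by auto

lemma assoc4:
  fixes A B X C :: "complex mat"
  assumes A: "A \<in> carrier_mat n n" and B: "B \<in> carrier_mat n n" and X: "X \<in> carrier_mat n m"
    and C: "C \<in> carrier_mat m m"
  shows "A * (B * X * C) = A * B * X * C"
proof -
  have "A * B * X * C = (A * B) * (X * C)"
    by (rule assoc_mult_mat[of _ n n _ m _ m]) (use A B X C in auto)
  also have "\<dots> = A * (B * (X * C))"
    by (rule assoc_mult_mat[of _ n n _ n _ m]) (use A B X C in auto)
  also have "B * (X * C) = B * X * C"
    by (rule assoc_mult_mat[symmetric, of _ n n _ m _ m]) (use B X C in auto)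
  finally show ?thesis by simp
qed

lemma assoc4':
  fixes A X C D :: "complex mat"
  assumes A: "A \<in> carrier_mat n n" and X: "X \<in> carrier_mat n m"
    and C: "C \<in> carrier_mat m m" and D: "D \<in> carrier_mat m m"
  shows "A * X * C * D = A * X * (C * D)"
  by (rule assoc_mult_mat[of _ n m _ m _ m]) (use A X C D in auto)

context group
begin

lemma bij_mult_left: "h \<in> carrier G \<Longrightarrow> bij_betw (\<lambda>g. h \<otimes> g) (carrier G) (carrier G)"
  unfolding bij_betw_def inj_on_def
proof (intro conjI ballI impI)
  assume h: "h \<in> carrier G"
  fix x y assume "x \<in> carrier G" "y \<in> carrier G" "h \<otimes> x = h \<otimes> y"
  thus "x = y" using h by simp
next
  assume h: "h \<in> carrier G"
  show "(\<otimes>) h ` carrier G = carrier G"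
  proof
    show "(\<otimes>) h ` carrier G \<subseteq> carrier G" using h by auto
    show "carrier G \<subseteq> (\<otimes>) h ` carrier G"
    proof
      fix y assume y: "y \<in> carrier G"
      have "y = h \<otimes> (inv h \<otimes> y)" using h y by (simp add: m_assoc[symmetric])
      thus "y \<in> (\<otimes>) h ` carrier G" using h y by blast
    qed
  qed
qed

lemma sandwich_carrier:
  assumes r: "is_rep G n \<rho>" and s: "is_rep G m \<sigma>" and X: "X \<in> carrier_mat n m" and g: "g \<in> carrier G"
  shows "\<rho> g * X * \<sigma> (inv g) \<in> carrier_mat n m"
proof -
  have "\<rho> g \<in> carrier_mat n n" "\<sigma> (inv g) \<in> carrier_mat m m"
    using rep_carrier[OF r g] rep_carrier[OF s inv_closed[OF g]] by auto
  thus ?thesis using X by auto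
qed

lemma avg_comm:
  assumes r: "is_rep G n \<rho>" and s: "is_rep G m \<sigma>" and X: "X \<in> carrier_mat n m" and h: "h \<in> carrier G"
  shows "\<rho> h * msum n m (\<lambda>g. \<rho> g * X * \<sigma> (inv g)) (carrier G)
       = msum n m (\<lambda>g. \<rho> g * X * \<sigma> (inv g)) (carrier G) * \<sigma> h"
proof -
  have rc: "\<And>g. g \<in> carrier G \<Longrightarrow> \<rho> g \<in> carrier_mat n n" using rep_carrier[OF r] .
  have sc: "\<And>g. g \<in> carrier G \<Longrightarrow> \<sigma> g \<in> carrier_mat m m" using rep_carrier[OF s] .
  have "\<rho> h * msum n m (\<lambda>g. \<rho> g * X * \<sigma> (inv g)) (carrier G)
      = msum n m (\<lambda>g. \<rho> h * (\<rho> g * X * \<sigma> (inv g))) (carrier G)"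
    by (rule msum_mult_left) (use rc h sandwich_carrier[OF r s X] in auto)
  also have "\<dots> = msum n m (\<lambda>g. \<rho> (h \<otimes> g) * X * \<sigma> (inv g)) (carrier G)"
  proof (rule msum_cong)
    fix g assume g: "g \<in> carrier G"
    have a: "\<rho> h \<in> carrier_mat n n" "\<rho> g \<in> carrier_mat n n" "\<sigma> (inv g) \<in> carrier_mat m m"
      using rc sc g h by auto
    show "\<rho> h * (\<rho> g * X * \<sigma> (inv g)) = \<rho> (h \<otimes> g) * X * \<sigma> (inv g)"
      unfolding rep_mult[OF r h g] by (rule assoc4) (use a X in auto)
  qed
  also have "\<dots> = msum n m (\<lambda>g. \<rho> g * X * \<sigma> (inv g) * \<sigma> h) (carrier G)"
  proof -
    have "msum n m (\<lambda>g. \<rho> g * X * \<sigma> (inv g) * \<sigma> h) (carrier G)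
        = msum n m (\<lambda>g. \<rho> (h \<otimes> g) * X * \<sigma> (inv (h \<otimes> g)) * \<sigma> h) (carrier G)"
      by (rule msum_reindex[OF bij_mult_left[OF h]])
    also have "\<dots> = msum n m (\<lambda>g. \<rho> (h \<otimes> g) * X * \<sigma> (inv g)) (carrier G)"
    proof (rule msum_cong)
      fix g assume g: "g \<in> carrier G"
      have a: "\<rho> (h \<otimes> g) \<in> carrier_mat n n" "\<sigma> (inv g) \<in> carrier_mat m m"
        "\<sigma> (inv h) \<in> carrier_mat m m" "\<sigma> h \<in> carrier_mat m m"
        using rc sc g h by auto
      have "inv (h \<otimes> g) = inv g \<otimes> inv h" using g h by (simp add: inv_mult_group)
      hence "\<sigma> (inv (h \<otimes> g)) * \<sigma> h = \<sigma> (inv g) * (\<sigma> (inv h) * \<sigma> h)"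
        using a g h by (simp add: rep_mult[OF s] assoc_mult_mat)
      also have "\<dots> = \<sigma> (inv g)" using rep_inv_l[OF s h] a by simp
      finally have e: "\<sigma> (inv (h \<otimes> g)) * \<sigma> h = \<sigma> (inv g)" .
      have "\<rho> (h \<otimes> g) * X * \<sigma> (inv (h \<otimes> g)) * \<sigma> h = \<rho> (h \<otimes> g) * X * (\<sigma> (inv (h \<otimes> g)) * \<sigma> h)"
        using a X g h sc by (intro assoc4') auto
      thus "\<rho> (h \<otimes> g) * X * \<sigma> (inv (h \<otimes> g)) * \<sigma> h = \<rho> (h \<otimes> g) * X * \<sigma> (inv g)"
        using e by simp
    qed
    finally show ?thesis by simp
  qed
  also have "\<dots> = msum n m (\<lambda>g. \<rho> g * X * \<sigma> (inv g)) (carrier G) * \<sigma> h"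
    by (rule msum_mult_right[symmetric]) (use sc h sandwich_carrier[OF r s X] in auto)
  finally show ?thesis .
qed

end

context group
begin

lemma orth_entries_diff:
  assumes r: "irreducible_rep G n \<rho>" and s: "irreducible_rep G m \<sigma>"
    and d: "\<exists>g \<in> carrier G. mat_trace (\<rho> g) \<noteq> mat_trace (\<sigma> g)"
    and a: "a < n" and b: "b < m"
  shows "(\<Sum>g\<in>carrier G. \<rho> g $$ (a,a) * \<sigma> (inv g) $$ (b,b)) = 0"
proof -
  have isr: "is_rep G n \<rho>" using r unfolding irreducible_rep_def by auto
  have iss: "is_rep G m \<sigma>" using s unfolding irreducible_rep_def by auto
  define T where "T = msum n m (\<lambda>g. \<rho> g * Emat n m a b * \<sigma> (inv g)) (carrier G)"
  have T: "T \<in> carrier_mat n m" unfolding T_def by simp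
  have "T = 0\<^sub>m n m"
  proof (rule ccontr)
    assume "T \<noteq> 0\<^sub>m n m"
    from schur_equiv[OF r s T _ this] d
    show False unfolding T_def using avg_comm[OF isr iss Emat_carrier] by auto
  qed
  hence "T $$ (a,b) = 0" using a b by simp
  moreover have "T $$ (a,b) = (\<Sum>g\<in>carrier G. \<rho> g $$ (a,a) * \<sigma> (inv g) $$ (b,b))"
    unfolding T_def using a b
    by (auto intro!: sum.cong Emat_sandwich rep_carrier[OF isr] rep_carrier[OF iss])
  ultimately show ?thesis by simp
qed

lemma orth_entries_same:
  assumes r: "irreducible_rep G n \<rho>" and a: "a < n" and b: "b < n"
  shows "(\<Sum>g\<in>carrier G. \<rho> g $$ (a,a) * \<rho> (inv g) $$ (b,b))
     = (if a = b then of_nat (card (carrier G)) / of_nat n else 0)"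
proof -
  have isr: "is_rep G n \<rho>" using r unfolding irreducible_rep_def by auto
  have n: "n > 0" using rep_pos[OF isr] .
  define T where "T = msum n n (\<lambda>g. \<rho> g * Emat n n a b * \<rho> (inv g)) (carrier G)"
  have T: "T \<in> carrier_mat n n" unfolding T_def by simp
  obtain c where c: "T = c \<cdot>\<^sub>m 1\<^sub>m n"
    using schur_scalar[OF r T] avg_comm[OF isr isr Emat_carrier] unfolding T_def by auto
  have "mat_trace T = (\<Sum>g\<in>carrier G. mat_trace (\<rho> g * Emat n n a b * \<rho> (inv g)))"
    unfolding T_def by (rule msum_trace) (use sandwich_carrier[OF isr isr Emat_carrier] in auto)
  also have "\<dots> = (\<Sum>g\<in>carrier G. mat_trace (Emat n n a b))"
  proof (rule sum.cong[OF refl])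
    fix g assume g: "g \<in> carrier G"
    show "mat_trace (\<rho> g * Emat n n a b * \<rho> (inv g)) = mat_trace (Emat n n a b)"
      by (rule mat_trace_similar[of _ n]) (use rep_carrier[OF isr] g rep_inv_l[OF isr g] in auto)
  qed
  also have "\<dots> = of_nat (card (carrier G)) * (if a = b then 1 else 0)"
    using Emat_trace[OF a b] by simp
  finally have trT: "mat_trace T = of_nat (card (carrier G)) * (if a = b then 1 else 0)" .
  have "mat_trace T = c * of_nat n" unfolding c mat_trace_def by simp
  with trT have cval: "c = of_nat (card (carrier G)) * (if a = b then 1 else 0) / of_nat n"
    using n by (simp add: field_simps)
  have "T $$ (a,b) = (\<Sum>g\<in>carrier G. \<rho> g $$ (a,a) * \<rho> (inv g) $$ (b,b))"
    unfolding T_def using a b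
    by (auto intro!: sum.cong Emat_sandwich rep_carrier[OF isr])
  moreover have "T $$ (a,b) = (if a = b then c else 0)" unfolding c using a b by auto
  ultimately show ?thesis using cval by auto
qed

lemma trace_prod_sum:
  "A \<in> carrier_mat n n \<Longrightarrow> B \<in> carrier_mat m m \<Longrightarrow>
    mat_trace A * mat_trace B = (\<Sum>a<n. \<Sum>b<m. A $$ (a,a) * B $$ (b,b))"
  by (simp add: mat_trace_alt sum_product)

lemma char_orth_diff:
  assumes r: "irreducible_rep G n \<rho>" and s: "irreducible_rep G m \<sigma>"
    and d: "\<exists>g \<in> carrier G. mat_trace (\<rho> g) \<noteq> mat_trace (\<sigma> g)"
  shows "(\<Sum>g\<in>carrier G. mat_trace (\<rho> g) * mat_trace (\<sigma> (inv g))) = 0"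
proof -
  have isr: "is_rep G n \<rho>" using r unfolding irreducible_rep_def by auto
  have iss: "is_rep G m \<sigma>" using s unfolding irreducible_rep_def by auto
  have "(\<Sum>g\<in>carrier G. mat_trace (\<rho> g) * mat_trace (\<sigma> (inv g)))
      = (\<Sum>g\<in>carrier G. \<Sum>a<n. \<Sum>b<m. \<rho> g $$ (a,a) * \<sigma> (inv g) $$ (b,b))"
    by (intro sum.cong refl trace_prod_sum rep_carrier[OF isr] rep_carrier[OF iss]) auto
  also have "\<dots> = (\<Sum>a<n. \<Sum>b<m. \<Sum>g\<in>carrier G. \<rho> g $$ (a,a) * \<sigma> (inv g) $$ (b,b))"
    by (simp add: sum.swap[of _ "carrier G"])
  also have "\<dots> = 0" using orth_entries_diff[OF r s d] by simp
  finally show ?thesis .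
qed

lemma char_orth_same:
  assumes r: "irreducible_rep G n \<rho>"
  shows "(\<Sum>g\<in>carrier G. mat_trace (\<rho> g) * mat_trace (\<rho> (inv g))) = of_nat (card (carrier G))"
proof -
  have isr: "is_rep G n \<rho>" using r unfolding irreducible_rep_def by auto
  have n: "n > 0" using rep_pos[OF isr] .
  have "(\<Sum>g\<in>carrier G. mat_trace (\<rho> g) * mat_trace (\<rho> (inv g)))
      = (\<Sum>g\<in>carrier G. \<Sum>a<n. \<Sum>b<n. \<rho> g $$ (a,a) * \<rho> (inv g) $$ (b,b))"
    by (intro sum.cong refl trace_prod_sum rep_carrier[OF isr]) auto
  also have "\<dots> = (\<Sum>a<n. \<Sum>b<n. \<Sum>g\<in>carrier G. \<rho> g $$ (a,a) * \<rho> (inv g) $$ (b,b))"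
    by (simp add: sum.swap[of _ "carrier G"])
  also have "\<dots> = (\<Sum>a<n. \<Sum>b<n. if a = b then of_nat (card (carrier G)) / of_nat n else 0)"
    using orth_entries_same[OF r] by simp
  also have "\<dots> = (\<Sum>a<n. of_nat (card (carrier G)) / of_nat n)" by simp
  also have "\<dots> = of_nat (card (carrier G))" using n by simp
  finally show ?thesis .
qed

lemma Irr_orth:
  assumes fin: "finite (carrier G)" and chi: "\<chi> \<in> Irr G" and psi: "\<psi> \<in> Irr G"
  shows "(\<Sum>g\<in>carrier G. \<chi> g * cnj (\<psi> g)) = (if \<chi> = \<psi> then of_nat (card (carrier G)) else 0)"
proof -
  obtain n \<rho> where r: "irreducible_rep G n \<rho>" and c: "\<chi> = (\<lambda>g. if g \<in> carrier G then mat_trace (\<rho> g) else 0)"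
    using chi unfolding Irr_def by auto
  obtain m \<sigma> where s: "irreducible_rep G m \<sigma>" and p: "\<psi> = (\<lambda>g. if g \<in> carrier G then mat_trace (\<sigma> g) else 0)"
    using psi unfolding Irr_def by auto
  have iss: "is_rep G m \<sigma>" using s unfolding irreducible_rep_def by auto
  have isr: "is_rep G n \<rho>" using r unfolding irreducible_rep_def by auto
  have eq1: "(\<Sum>g\<in>carrier G. \<chi> g * cnj (\<psi> g)) = (\<Sum>g\<in>carrier G. mat_trace (\<rho> g) * mat_trace (\<sigma> (inv g)))"
    unfolding c p by (intro sum.cong refl) (simp add: rep_char_bound(2)[OF fin iss])
  show ?thesis
  proof (cases "\<chi> = \<psi>")
    case True
    have eq2: "(\<Sum>g\<in>carrier G. \<chi> g * cnj (\<psi> g)) = (\<Sum>g\<in>carrier G. mat_trace (\<rho> g) * mat_trace (\<rho> (inv g)))"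
      unfolding True[symmetric] c by (intro sum.cong refl) (simp add: rep_char_bound(2)[OF fin isr])
    show ?thesis using True eq2 char_orth_same[OF r] by simp
  next
    case False
    have "\<exists>g \<in> carrier G. mat_trace (\<rho> g) \<noteq> mat_trace (\<sigma> g)"
    proof (rule ccontr)
      assume "\<not> ?thesis"
      hence "\<chi> = \<psi>" unfolding c p by auto
      with False show False by simp
    qed
    thus ?thesis using False eq1 char_orth_diff[OF r s] by simp
  qed
qed

end

lemma sum_split_shift:
  fixes f :: "nat \<Rightarrow> complex"
  assumes "k \<le> n"
  shows "(\<Sum>l<n. f l) = (\<Sum>l<k. f l) + (\<Sum>l<n-k. f (l+k))"
proof -
  have "{..<n} = {..<k} \<union> {k..<n}" using assms by auto
  hence "(\<Sum>l<n. f l) = (\<Sum>l<k. f l) + (\<Sum>l\<in>{k..<n}. f l)"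
    by (simp add: sum.union_disjoint[of "{..<k}" "{k..<n}"] ivl_disj_int)
  also have "(\<Sum>l\<in>{k..<n}. f l) = (\<Sum>l<n-k. f (l+k))"
    by (rule sum.reindex_bij_witness[of _ "\<lambda>l. l + k" "\<lambda>l. l - k"]) (use assms in auto)
  finally show ?thesis .
qed

definition ul :: "nat \<Rightarrow> complex mat \<Rightarrow> complex mat" where
  "ul k S = mat k k (\<lambda>(i,j). S $$ (i,j))"

definition lr :: "nat \<Rightarrow> nat \<Rightarrow> complex mat \<Rightarrow> complex mat" where
  "lr n k S = mat (n-k) (n-k) (\<lambda>(i,j). S $$ (i+k,j+k))"

definition llz :: "nat \<Rightarrow> nat \<Rightarrow> complex mat \<Rightarrow> bool" where
  "llz n k S \<longleftrightarrow> (\<forall>i l. k \<le> i \<longrightarrow> i < n \<longrightarrow> l < k \<longrightarrow> S $$ (i,l) = 0)"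

lemma block_mult:
  assumes S1: "S1 \<in> carrier_mat n n" and S2: "S2 \<in> carrier_mat n n"
    and z1: "llz n k S1" and z2: "llz n k S2" and k: "k \<le> n"
  shows "ul k (S1 * S2) = ul k S1 * ul k S2" "lr n k (S1 * S2) = lr n k S1 * lr n k S2"
    "llz n k (S1 * S2)"
proof -
  have prod: "\<And>i j. i < n \<Longrightarrow> j < n \<Longrightarrow> (S1 * S2) $$ (i,j) = (\<Sum>l<n. S1 $$ (i,l) * S2 $$ (l,j))"
    using S1 S2 by (auto simp: scalar_prod_def lessThan_atLeast0 intro!: sum.cong)
  show "ul k (S1 * S2) = ul k S1 * ul k S2"
  proof (rule eq_matI)
    fix i j assume "i < dim_row (ul k S1 * ul k S2)" "j < dim_col (ul k S1 * ul k S2)"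
    hence i: "i < k" and j: "j < k" unfolding ul_def by auto
    have "(S1 * S2) $$ (i,j) = (\<Sum>l<k. S1 $$ (i,l) * S2 $$ (l,j)) + (\<Sum>l<n-k. S1 $$ (i,l+k) * S2 $$ (l+k,j))"
      using prod[of i j] i j k sum_split_shift[OF k] by simp
    also have "(\<Sum>l<n-k. S1 $$ (i,l+k) * S2 $$ (l+k,j)) = 0"
      using z2 j unfolding llz_def by (intro sum.neutral) auto
    finally have "(S1 * S2) $$ (i,j) = (\<Sum>l<k. S1 $$ (i,l) * S2 $$ (l,j))" by simp
    thus "ul k (S1 * S2) $$ (i,j) = (ul k S1 * ul k S2) $$ (i,j)"
      using i j k unfolding ul_def by (auto simp: scalar_prod_def lessThan_atLeast0 intro!: sum.cong)
  qed (auto simp: ul_def)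
  show "lr n k (S1 * S2) = lr n k S1 * lr n k S2"
  proof (rule eq_matI)
    fix i j assume "i < dim_row (lr n k S1 * lr n k S2)" "j < dim_col (lr n k S1 * lr n k S2)"
    hence i: "i < n - k" and j: "j < n - k" unfolding lr_def by auto
    have "(S1 * S2) $$ (i+k,j+k) = (\<Sum>l<k. S1 $$ (i+k,l) * S2 $$ (l,j+k)) + (\<Sum>l<n-k. S1 $$ (i+k,l+k) * S2 $$ (l+k,j+k))"
      using prod[of "i+k" "j+k"] i j k sum_split_shift[OF k] by simp
    also have "(\<Sum>l<k. S1 $$ (i+k,l) * S2 $$ (l,j+k)) = 0"
      using z1 i unfolding llz_def by (intro sum.neutral) auto
    finally have "(S1 * S2) $$ (i+k,j+k) = (\<Sum>l<n-k. S1 $$ (i+k,l+k) * S2 $$ (l+k,j+k))" by simp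
    thus "lr n k (S1 * S2) $$ (i,j) = (lr n k S1 * lr n k S2) $$ (i,j)"
      using i j k unfolding lr_def by (auto simp: scalar_prod_def lessThan_atLeast0 intro!: sum.cong)
  qed (auto simp: lr_def)
  show "llz n k (S1 * S2)" unfolding llz_def
  proof (intro allI impI)
    fix i l assume i: "k \<le> i" "i < n" and l: "l < k"
    have "(S1 * S2) $$ (i,l) = (\<Sum>l'<k. S1 $$ (i,l') * S2 $$ (l',l)) + (\<Sum>l'<n-k. S1 $$ (i,l'+k) * S2 $$ (l'+k,l))"
      using prod[of i l] i l k sum_split_shift[OF k] by simp
    also have "(\<Sum>l'<k. S1 $$ (i,l') * S2 $$ (l',l)) = 0"
      using z1 i unfolding llz_def by (intro sum.neutral) auto
    also have "(\<Sum>l'<n-k. S1 $$ (i,l'+k) * S2 $$ (l'+k,l)) = 0"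
      using z2 l unfolding llz_def by (intro sum.neutral) auto
    finally show "(S1 * S2) $$ (i,l) = 0" by simp
  qed
qed

lemma block_trace:
  assumes S: "S \<in> carrier_mat n n" and k: "k \<le> n"
  shows "mat_trace S = mat_trace (ul k S) + mat_trace (lr n k S)"
proof -
  have "mat_trace S = (\<Sum>i<n. S $$ (i,i))" using S by (simp add: mat_trace_alt)
  also have "\<dots> = (\<Sum>i<k. S $$ (i,i)) + (\<Sum>i<n-k. S $$ (i+k,i+k))" by (rule sum_split_shift[OF k])
  also have "(\<Sum>i<k. S $$ (i,i)) = mat_trace (ul k S)" unfolding ul_def mat_trace_def by simp
  also have "(\<Sum>i<n-k. S $$ (i+k,i+k)) = mat_trace (lr n k S)" unfolding lr_def mat_trace_def by simp
  finally show ?thesis .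
qed

lemma block_one: "k \<le> n \<Longrightarrow> ul k (1\<^sub>m n) = 1\<^sub>m k \<and> lr n k (1\<^sub>m n) = 1\<^sub>m (n-k) \<and> llz n k (1\<^sub>m n)"
  unfolding ul_def lr_def llz_def by (auto intro!: eq_matI)

lemma conj_mult:
  fixes P Q A B :: "complex mat"
  assumes P: "P \<in> carrier_mat n n" and Q: "Q \<in> carrier_mat n n" and PQ: "P * Q = 1\<^sub>m n"
    and A: "A \<in> carrier_mat n n" and B: "B \<in> carrier_mat n n"
  shows "Q * (A * B) * P = (Q * A * P) * (Q * B * P)"
proof -
  have "(Q * A * P) * (Q * B * P) = Q * A * (P * (Q * B * P))"
    by (rule assoc_mult_mat[of _ n n _ n _ n]) (use P Q A B in auto)
  also have "P * (Q * B * P) = (P * Q) * (B * P)"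
  proof -
    have "P * (Q * B * P) = P * (Q * (B * P))" using Q B P by (simp add: assoc_mult_mat)
    also have "\<dots> = (P * Q) * (B * P)"
      by (rule assoc_mult_mat[symmetric, of _ n n _ n _ n]) (use P Q B in auto)
    finally show ?thesis .
  qed
  also have "\<dots> = B * P" using PQ B P by simp
  also have "Q * A * (B * P) = Q * (A * (B * P))"
    by (rule assoc_mult_mat[of _ n n _ n _ n]) (use P Q A B in auto)
  also have "A * (B * P) = A * B * P"
    by (rule assoc_mult_mat[symmetric, of _ n n _ n _ n]) (use P A B in auto)
  also have "Q * (A * B * P) = Q * (A * B) * P"
    by (rule assoc_mult_mat[symmetric, of _ n n _ n _ n]) (use P Q A B in auto)
  finally show ?thesis ..
qed

lemma injm_nil: "injm (mat_of_cols n [])"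
  unfolding injm_def by (auto intro!: eq_vecI)

lemma mat_of_cols_unit:
  fixes ws :: "complex vec list"
  assumes "j < length ws" "set ws \<subseteq> carrier_vec n"
  shows "mat_of_cols n ws *\<^sub>v unit_vec (length ws) j = ws ! j"
proof (rule eq_vecI)
  have wj: "ws ! j \<in> carrier_vec n" using assms by auto
  fix i assume "i < dim_vec (ws ! j)"
  hence i: "i < n" using wj by auto
  show "(mat_of_cols n ws *\<^sub>v unit_vec (length ws) j) $ i = ws ! j $ i"
    using i assms by (simp add: mat_of_cols_index)
next
  have "ws ! j \<in> carrier_vec n" using assms by auto
  thus "dim_vec (mat_of_cols n ws *\<^sub>v unit_vec (length ws) j) = dim_vec (ws ! j)" by simp
qed

context group
begin

lemma block_split:
  assumes r: "is_rep G n \<sigma>" and W: "is_subspace n W"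
    and inv: "\<forall>g \<in> carrier G. \<forall>w \<in> W. \<sigma> g *\<^sub>v w \<in> W"
    and nz: "W \<noteq> {0\<^sub>v n}" and nf: "W \<noteq> carrier_vec n"
  shows "\<exists>k A C. 0 < k \<and> k < n \<and> is_rep G k A \<and> is_rep G (n-k) C \<and>
     (\<forall>g \<in> carrier G. mat_trace (\<sigma> g) = mat_trace (A g) + mat_trace (C g))"
proof -
  have Wc: "W \<subseteq> carrier_vec n" using W unfolding is_subspace_def by auto
  obtain bs where bs: "set bs \<subseteq> W" "injm (mat_of_cols n bs)" "\<forall>u \<in> W. inspan n bs u"
    using extend_basis[OF Wc, of "[]"] injm_nil by auto
  have bsc: "set bs \<subseteq> carrier_vec n" using bs Wc by auto
  obtain cs where cs: "set cs \<subseteq> carrier_vec n" "injm (mat_of_cols n (bs @ cs))"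
      "\<forall>u \<in> carrier_vec n. inspan n (bs @ cs) u"
    using extend_basis[of "carrier_vec n" n bs] bsc bs(2) by auto
  have allc: "set (bs @ cs) \<subseteq> carrier_vec n" using bsc cs by auto
  define k where "k = length bs"
  define L where "L = length (bs @ cs)"
  define P where "P = mat_of_cols n (bs @ cs)"
  have PL: "P \<in> carrier_mat n L" unfolding P_def L_def by auto
  have Ln: "L \<le> n" using injm_le[OF PL] cs(2) unfolding P_def by auto
  have "\<forall>j<n. \<exists>x. x \<in> carrier_vec L \<and> unit_vec n j = P *\<^sub>v x"
    using cs(3) unfolding inspan_def P_def L_def by auto
  then obtain xf where xf: "\<And>j. j < n \<Longrightarrow> xf j \<in> carrier_vec L \<and> unit_vec n j = P *\<^sub>v xf j"
    by metis
  define X where "X = mat_of_cols L (map xf [0..<n])"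
  have X: "X \<in> carrier_mat L n" unfolding X_def by auto
  have Xe: "\<And>j. j < n \<Longrightarrow> X *\<^sub>v unit_vec n j = xf j"
  proof -
    fix j assume j: "j < n"
    have "X *\<^sub>v unit_vec (length (map xf [0..<n])) j = map xf [0..<n] ! j"
      unfolding X_def by (rule mat_of_cols_unit) (use j xf in auto)
    thus "X *\<^sub>v unit_vec n j = xf j" using j by simp
  qed
  have PX: "P * X = 1\<^sub>m n"
  proof (rule mat_eq_by_cols[of _ n n])
    fix j assume j: "j < n"
    have "(P * X) *\<^sub>v unit_vec n j = P *\<^sub>v (X *\<^sub>v unit_vec n j)"
      by (rule assoc_mult_mat_vec[OF PL X]) auto
    also have "\<dots> = unit_vec n j" using Xe[OF j] xf[OF j] by simp
    finally show "(P * X) *\<^sub>v unit_vec n j = 1\<^sub>m n *\<^sub>v unit_vec n j" by simp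
  qed (use PL X in auto)
  have "injm X" unfolding injm_def
  proof (intro ballI impI)
    fix c assume c: "c \<in> carrier_vec (dim_col X)" and z: "X *\<^sub>v c = 0\<^sub>v (dim_row X)"
    have c': "c \<in> carrier_vec n" using c X by auto
    have "c = (P * X) *\<^sub>v c" using PX c' by simp
    also have "\<dots> = P *\<^sub>v (X *\<^sub>v c)" by (rule assoc_mult_mat_vec[OF PL X c'])
    also have "\<dots> = 0\<^sub>v n" using z X PL by auto
    finally show "c = 0\<^sub>v (dim_col X)" using X by auto
  qed
  hence nL: "n \<le> L" using injm_le[OF X] by auto
  hence Ln': "L = n" using Ln by auto
  have P: "P \<in> carrier_mat n n" using PL Ln' by simp
  have X': "X \<in> carrier_mat n n" using X Ln' by simp
  have XP: "X * P = 1\<^sub>m n" using mat_mult_left_right_inverse[OF P X' PX] .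
  have kpos: "0 < k"
  proof (rule ccontr)
    assume "\<not> 0 < k"
    hence bs0: "bs = []" unfolding k_def by auto
    obtain w where w: "w \<in> W" "w \<noteq> 0\<^sub>v n" using nz W unfolding is_subspace_def by auto
    from bs(3) w(1) obtain c where "c \<in> carrier_vec 0" "w = mat_of_cols n [] *\<^sub>v c"
      unfolding inspan_def bs0 by auto
    hence "w = 0\<^sub>v n" by (intro eq_vecI) (auto simp: scalar_prod_def)
    with w show False by simp
  qed
  have kn: "k < n"
  proof (rule ccontr)
    assume "\<not> k < n"
    hence "cs = []" using Ln' unfolding k_def L_def by auto
    hence "carrier_vec n \<subseteq> W" using cs(3) inspan_subspace[OF W bs(1)] by auto
    with Wc nf show False by auto
  qed
  have kL: "k \<le> n" using kn by auto
  define S where "S = (\<lambda>g. X * \<sigma> g * P)"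
  have Sc: "\<And>g. g \<in> carrier G \<Longrightarrow> S g \<in> carrier_mat n n"
    unfolding S_def using X' P rep_carrier[OF r] by auto
  have Smult: "\<And>g h. g \<in> carrier G \<Longrightarrow> h \<in> carrier G \<Longrightarrow> S (g \<otimes> h) = S g * S h"
    unfolding S_def using conj_mult[OF P X' PX] rep_carrier[OF r] by (simp add: rep_mult[OF r])
  have Sone: "S \<one> = 1\<^sub>m n" unfolding S_def using rep_one[OF r] XP X' P by simp
  have Str: "\<And>g. g \<in> carrier G \<Longrightarrow> mat_trace (S g) = mat_trace (\<sigma> g)"
    unfolding S_def by (rule mat_trace_similar[OF _ X' P PX]) (rule rep_carrier[OF r])
  have Sz: "\<And>g. g \<in> carrier G \<Longrightarrow> llz n k (S g)"
  proof -
    fix g assume g: "g \<in> carrier G"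
    have sg: "\<sigma> g \<in> carrier_mat n n" using rep_carrier[OF r g] .
    show "llz n k (S g)" unfolding llz_def
    proof (intro allI impI)
      fix i l assume i: "k \<le> i" "i < n" and l: "l < k"
      have Pe: "P *\<^sub>v unit_vec n l = bs ! l"
        using mat_of_cols_unit[of l "bs @ cs" n] allc l Ln' unfolding P_def k_def L_def
        by (simp add: nth_append)
      have "bs ! l \<in> W" using bs(1) l unfolding k_def by auto
      hence "\<sigma> g *\<^sub>v (bs ! l) \<in> W" using inv g by auto
      then obtain c where c: "c \<in> carrier_vec k" "\<sigma> g *\<^sub>v (bs ! l) = mat_of_cols n bs *\<^sub>v c"
        using bs(3) unfolding inspan_def k_def by auto
      define c' where "c' = vec n (\<lambda>i. if i < k then c $ i else 0)"
      have c'c: "c' \<in> carrier_vec n" unfolding c'_def by auto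
      have "mat_of_cols n bs *\<^sub>v c = P *\<^sub>v c'"
      proof (rule eq_vecI)
        fix i assume "i < dim_vec (P *\<^sub>v c')"
        hence i: "i < n" using P by auto
        have "(P *\<^sub>v c') $ i = (\<Sum>j<n. (bs @ cs) ! j $ i * c' $ j)"
          unfolding P_def using i c'c Ln' L_def by (subst mat_of_cols_mult_vec_index) auto
        also have "\<dots> = (\<Sum>j<k. (bs @ cs) ! j $ i * c' $ j) + (\<Sum>j<n-k. (bs @ cs) ! (j+k) $ i * c' $ (j+k))"
          by (rule sum_split_shift[OF kL])
        also have "(\<Sum>j<n-k. (bs @ cs) ! (j+k) $ i * c' $ (j+k)) = 0"
          unfolding c'_def by (intro sum.neutral) auto
        also have "(\<Sum>j<k. (bs @ cs) ! j $ i * c' $ j) = (\<Sum>j<k. bs ! j $ i * c $ j)"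
          unfolding c'_def k_def using kn by (intro sum.cong) (auto simp: nth_append k_def)
        also have "\<dots> = (mat_of_cols n bs *\<^sub>v c) $ i"
          using i c unfolding k_def by (subst mat_of_cols_mult_vec_index) auto
        finally show "(mat_of_cols n bs *\<^sub>v c) $ i = (P *\<^sub>v c') $ i" by simp
      qed (use P in auto)
      hence sgb: "\<sigma> g *\<^sub>v (bs ! l) = P *\<^sub>v c'" using c by simp
      have XS: "X * \<sigma> g \<in> carrier_mat n n" using X' sg by simp
      have "S g *\<^sub>v unit_vec n l = (X * \<sigma> g) *\<^sub>v (P *\<^sub>v unit_vec n l)"
        unfolding S_def by (rule assoc_mult_mat_vec[OF XS P]) simp
      also have "\<dots> = X *\<^sub>v (\<sigma> g *\<^sub>v (P *\<^sub>v unit_vec n l))"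
        by (rule assoc_mult_mat_vec[OF X' sg]) (use P in simp)
      also have "\<dots> = X *\<^sub>v (P *\<^sub>v c')" unfolding Pe sgb ..
      also have "\<dots> = (X * P) *\<^sub>v c'" using X' P c'c by simp
      also have "\<dots> = c'" using XP c'c by simp
      finally have "S g *\<^sub>v unit_vec n l = c'" .
      hence "(S g *\<^sub>v unit_vec n l) $ i = 0" using i unfolding c'_def by simp
      moreover have "(S g *\<^sub>v unit_vec n l) $ i = S g $$ (i,l)"
        using Sc[OF g] i l kn by simp
      ultimately show "S g $$ (i,l) = 0" by simp
    qed
  qed
  define A where "A = (\<lambda>g. ul k (S g))"
  define C where "C = (\<lambda>g. lr n k (S g))"
  have repA: "is_rep G k A" unfolding is_rep_def A_def
  proof (intro conjI ballI)
    show "0 < k" by fact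
    fix g assume g: "g \<in> carrier G"
    show "ul k (S g) \<in> carrier_mat k k" unfolding ul_def by auto
    fix h assume h: "h \<in> carrier G"
    show "ul k (S (g \<otimes> h)) = ul k (S g) * ul k (S h)"
      using block_mult(1)[OF Sc[OF g] Sc[OF h] Sz[OF g] Sz[OF h] kL] Smult[OF g h] by simp
  next
    show "ul k (S \<one>) = 1\<^sub>m k" using Sone block_one[OF kL] by simp
  qed
  have repC: "is_rep G (n-k) C" unfolding is_rep_def C_def
  proof (intro conjI ballI)
    show "0 < n - k" using kn by simp
    fix g assume g: "g \<in> carrier G"
    show "lr n k (S g) \<in> carrier_mat (n-k) (n-k)" unfolding lr_def by auto
    fix h assume h: "h \<in> carrier G"
    show "lr n k (S (g \<otimes> h)) = lr n k (S g) * lr n k (S h)"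
      using block_mult(2)[OF Sc[OF g] Sc[OF h] Sz[OF g] Sz[OF h] kL] Smult[OF g h] by simp
  next
    show "lr n k (S \<one>) = 1\<^sub>m (n-k)" using Sone block_one[OF kL] by simp
  qed
  have "\<forall>g \<in> carrier G. mat_trace (\<sigma> g) = mat_trace (A g) + mat_trace (C g)"
    unfolding A_def C_def using Str block_trace[OF Sc kL] by simp
  thus ?thesis using kpos kn repA repC by blast
qed

lemma rep_decomp:
  assumes "is_rep G n \<sigma>"
  shows "\<exists>cs. set cs \<subseteq> Irr G \<and> (\<forall>g \<in> carrier G. mat_trace (\<sigma> g) = (\<Sum>c\<leftarrow>cs. c g))"
  using assms
proof (induction n arbitrary: \<sigma> rule: less_induct)
  case (less n)
  show ?case
  proof (cases "irreducible_rep G n \<sigma>")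
    case True
    define \<chi> where "\<chi> = (\<lambda>g. if g \<in> carrier G then mat_trace (\<sigma> g) else 0)"
    have "\<chi> \<in> Irr G" unfolding Irr_def \<chi>_def using True by auto
    thus ?thesis by (intro exI[of _ "[\<chi>]"]) (auto simp: \<chi>_def)
  next
    case False
    then obtain W where W: "is_subspace n W" "\<forall>g \<in> carrier G. \<forall>w \<in> W. \<sigma> g *\<^sub>v w \<in> W"
      "W \<noteq> {0\<^sub>v n}" "W \<noteq> carrier_vec n"
      using less.prems unfolding irreducible_rep_def by blast
    obtain k A C where kAC: "0 < k" "k < n" "is_rep G k A" "is_rep G (n-k) C"
      "\<forall>g \<in> carrier G. mat_trace (\<sigma> g) = mat_trace (A g) + mat_trace (C g)"
      using block_split[OF less.prems W] by blast
    obtain c1 where c1: "set c1 \<subseteq> Irr G" "\<forall>g \<in> carrier G. mat_trace (A g) = (\<Sum>c\<leftarrow>c1. c g)"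
      using less.IH[OF kAC(2) kAC(3)] by blast
    obtain c2 where c2: "set c2 \<subseteq> Irr G" "\<forall>g \<in> carrier G. mat_trace (C g) = (\<Sum>c\<leftarrow>c2. c g)"
      using less.IH[OF _ kAC(4)] kAC(1,2) by auto
    show ?thesis using c1 c2 kAC(5) by (intro exI[of _ "c1 @ c2"]) auto
  qed
qed

end

context group
begin

lemma regular_rep:
  assumes fin: "finite (carrier G)"
  shows "\<exists>R. is_rep G (card (carrier G)) R \<and>
    (\<forall>g \<in> carrier G. mat_trace (R g) = (if g = \<one> then of_nat (card (carrier G)) else 0))"
proof -
  define N where "N = card (carrier G)"
  obtain el where el: "bij_betw el {0..<N} (carrier G)"
    using ex_bij_betw_nat_finite[OF fin] unfolding N_def by auto
  have elc: "\<And>i. i < N \<Longrightarrow> el i \<in> carrier G" using el unfolding bij_betw_def by auto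
  have elinj: "\<And>i j. i < N \<Longrightarrow> j < N \<Longrightarrow> el i = el j \<Longrightarrow> i = j"
    using el unfolding bij_betw_def inj_on_def by auto
  have elsurj: "\<And>y. y \<in> carrier G \<Longrightarrow> \<exists>i<N. el i = y"
    using el unfolding bij_betw_def by force
  have Npos: "N > 0" unfolding N_def using fin one_closed card_gt_0_iff by blast
  define R where "R = (\<lambda>g. mat N N (\<lambda>(i,j). if el i = g \<otimes> el j then 1 else 0) :: complex mat)"
  have "is_rep G N R" unfolding is_rep_def
  proof (intro conjI ballI)
    show "0 < N" by fact
    fix g assume g: "g \<in> carrier G"
    show "R g \<in> carrier_mat N N" unfolding R_def by auto
    fix h assume h: "h \<in> carrier G"
    show "R (g \<otimes> h) = R g * R h"
    proof (rule eq_matI)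
      fix i j assume "i < dim_row (R g * R h)" "j < dim_col (R g * R h)"
      hence i: "i < N" and j: "j < N" unfolding R_def by auto
      obtain l0 where l0: "l0 < N" "el l0 = h \<otimes> el j" using elsurj[of "h \<otimes> el j"] h elc[OF j] by auto
      have "(R g * R h) $$ (i,j) = (\<Sum>l<N. (if el i = g \<otimes> el l then 1 else 0) * (if el l = h \<otimes> el j then 1 else 0))"
        unfolding R_def using i j by (auto simp: scalar_prod_def lessThan_atLeast0 intro!: sum.cong)
      also have "\<dots> = (\<Sum>l<N. if l = l0 then (if el i = g \<otimes> el l0 then 1 else 0) else 0)"
      proof (rule sum.cong[OF refl])
        fix l assume l: "l \<in> {..<N}"
        have "el l = h \<otimes> el j \<longleftrightarrow> l = l0" using elinj[of l l0] l l0 by auto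
        thus "(if el i = g \<otimes> el l then 1 else 0) * (if el l = h \<otimes> el j then 1 else 0)
           = (if l = l0 then (if el i = g \<otimes> el l0 then 1 else 0) else (0::complex))" by auto
      qed
      also have "\<dots> = (if el i = g \<otimes> el l0 then 1 else 0)" using l0 by simp
      also have "g \<otimes> el l0 = g \<otimes> h \<otimes> el j" using l0 g h elc[OF j] by (simp add: m_assoc)
      finally show "R (g \<otimes> h) $$ (i,j) = (R g * R h) $$ (i,j)" unfolding R_def using i j by simp
    qed (auto simp: R_def)
  next
    show "R \<one> = 1\<^sub>m N"
    proof (rule eq_matI)
      fix i j assume "i < dim_row (1\<^sub>m N :: complex mat)" "j < dim_col (1\<^sub>m N :: complex mat)"
      hence i: "i < N" and j: "j < N" by auto
      have "el i = el j \<longleftrightarrow> i = j" using elinj[OF i j] by auto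
      thus "R \<one> $$ (i,j) = 1\<^sub>m N $$ (i,j)" unfolding R_def using i j elc[OF j] by auto
    qed (auto simp: R_def)
  qed
  moreover have "\<forall>g \<in> carrier G. mat_trace (R g) = (if g = \<one> then of_nat N else 0)"
  proof
    fix g assume g: "g \<in> carrier G"
    have "mat_trace (R g) = (\<Sum>i<N. if el i = g \<otimes> el i then 1 else 0)"
      unfolding R_def mat_trace_def by simp
    also have "\<dots> = (\<Sum>i<N. if g = \<one> then 1 else 0)"
    proof (rule sum.cong[OF refl])
      fix i assume "i \<in> {..<N}"
      hence ei: "el i \<in> carrier G" using elc by auto
      have "el i = g \<otimes> el i \<longleftrightarrow> g = \<one>" using ei g by (metis r_cancel_one')
      thus "(if el i = g \<otimes> el i then 1 else 0) = (if g = \<one> then 1 else (0::complex))" by simp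
    qed
    also have "\<dots> = (if g = \<one> then of_nat N else 0)" by simp
    finally show "mat_trace (R g) = (if g = \<one> then of_nat N else 0)" .
  qed
  ultimately show ?thesis unfolding N_def by blast
qed

lemma Irr_char:
  assumes fin: "finite (carrier G)" and chi: "\<chi> \<in> Irr G"
  shows "\<exists>n. n > 0 \<and> \<chi> \<one> = of_nat n \<and> (\<forall>g \<in> carrier G. cmod (\<chi> g) \<le> real n)
     \<and> (\<forall>g \<in> carrier G. \<chi> (inv g) = cnj (\<chi> g))
     \<and> (\<forall>g \<in> carrier G. \<forall>h \<in> carrier G. \<chi> (inv h \<otimes> g \<otimes> h) = \<chi> g)"
proof -
  obtain n \<rho> where r: "irreducible_rep G n \<rho>" and c: "\<chi> = (\<lambda>g. if g \<in> carrier G then mat_trace (\<rho> g) else 0)"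
    using chi unfolding Irr_def by auto
  have isr: "is_rep G n \<rho>" using r unfolding irreducible_rep_def by auto
  show ?thesis
    using rep_pos[OF isr] rep_one[OF isr] rep_char_bound[OF fin isr] rep_class[OF isr]
    unfolding c by (intro exI[of _ n]) auto
qed

lemma class_fun_orth_zero:
  assumes fin: "finite (carrier G)"
    and cf: "\<forall>g \<in> carrier G. \<forall>h \<in> carrier G. f (inv h \<otimes> g \<otimes> h) = f g"
    and orth: "\<forall>\<chi> \<in> Irr G. (\<Sum>g\<in>carrier G. f g * cnj (\<chi> g)) = 0"
    and x: "x \<in> carrier G"
  shows "f x = 0"
proof -
  have key: "\<And>n \<rho>. irreducible_rep G n \<rho> \<Longrightarrow> \<forall>y \<in> carrier G. (\<Sum>g\<in>carrier G. f g * mat_trace (\<rho> (inv g \<otimes> y))) = 0"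
  proof -
    fix n \<rho> assume r: "irreducible_rep G n \<rho>"
    have isr: "is_rep G n \<rho>" using r unfolding irreducible_rep_def by auto
    have rc: "\<And>g. g \<in> carrier G \<Longrightarrow> \<rho> g \<in> carrier_mat n n" using rep_carrier[OF isr] .
    define T where "T = msum n n (\<lambda>g. f g \<cdot>\<^sub>m \<rho> (inv g)) (carrier G)"
    have T: "T \<in> carrier_mat n n" unfolding T_def by simp
    have Fc: "\<And>g. g \<in> carrier G \<Longrightarrow> f g \<cdot>\<^sub>m \<rho> (inv g) \<in> carrier_mat n n" using rc by auto
    have comm: "\<And>h. h \<in> carrier G \<Longrightarrow> \<rho> h * T = T * \<rho> h"
    proof -
      fix h assume h: "h \<in> carrier G"
      have "\<rho> h * T = msum n n (\<lambda>g. \<rho> h * (f g \<cdot>\<^sub>m \<rho> (inv g))) (carrier G)"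
        unfolding T_def by (rule msum_mult_left[OF rc[OF h] Fc])
      also have "\<dots> = msum n n (\<lambda>g. f g \<cdot>\<^sub>m \<rho> (h \<otimes> inv g)) (carrier G)"
      proof (rule msum_cong)
        fix g assume g: "g \<in> carrier G"
        show "\<rho> h * (f g \<cdot>\<^sub>m \<rho> (inv g)) = f g \<cdot>\<^sub>m \<rho> (h \<otimes> inv g)"
          using mult_smult_distrib[OF rc[OF h] rc[OF inv_closed[OF g]]] rep_mult[OF isr h inv_closed[OF g]]
          by simp
      qed
      also have "\<dots> = msum n n (\<lambda>g. f g \<cdot>\<^sub>m \<rho> (inv g \<otimes> h)) (carrier G)"
      proof -
        have bij: "bij_betw (\<lambda>g. h \<otimes> g \<otimes> inv h) (carrier G) (carrier G)"
          unfolding bij_betw_def inj_on_def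
        proof (intro conjI ballI impI)
          fix a b assume a: "a \<in> carrier G" and b: "b \<in> carrier G" and e: "h \<otimes> a \<otimes> inv h = h \<otimes> b \<otimes> inv h"
          thus "a = b" using h by simp
        next
          show "(\<lambda>g. h \<otimes> g \<otimes> inv h) ` carrier G = carrier G"
          proof
            show "(\<lambda>g. h \<otimes> g \<otimes> inv h) ` carrier G \<subseteq> carrier G" using h by auto
            show "carrier G \<subseteq> (\<lambda>g. h \<otimes> g \<otimes> inv h) ` carrier G"
            proof
              fix y assume y: "y \<in> carrier G"
              have hi: "inv h \<in> carrier G" using h by simp
              have "h \<otimes> (inv h \<otimes> y \<otimes> h) \<otimes> inv h = (h \<otimes> inv h) \<otimes> y \<otimes> (h \<otimes> inv h)"
                using h y hi by (simp only: m_assoc m_closed)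
              also have "\<dots> = y" using h y by simp
              finally have "y = h \<otimes> (inv h \<otimes> y \<otimes> h) \<otimes> inv h" by simp
              thus "y \<in> (\<lambda>g. h \<otimes> g \<otimes> inv h) ` carrier G" using h y by blast
            qed
          qed
        qed
        have "msum n n (\<lambda>g. f g \<cdot>\<^sub>m \<rho> (inv g \<otimes> h)) (carrier G)
            = msum n n (\<lambda>g. f (h \<otimes> g \<otimes> inv h) \<cdot>\<^sub>m \<rho> (inv (h \<otimes> g \<otimes> inv h) \<otimes> h)) (carrier G)"
          by (rule msum_reindex[OF bij])
        also have "\<dots> = msum n n (\<lambda>g. f g \<cdot>\<^sub>m \<rho> (h \<otimes> inv g)) (carrier G)"
        proof (rule msum_cong)
          fix g assume g: "g \<in> carrier G"
          have e1: "f (h \<otimes> g \<otimes> inv h) = f g"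
            using cf[rule_format, OF g inv_closed[OF h]] h by simp
          have "inv (h \<otimes> g \<otimes> inv h) \<otimes> h = h \<otimes> inv g"
            using g h by (simp add: inv_mult_group m_assoc)
          thus "f (h \<otimes> g \<otimes> inv h) \<cdot>\<^sub>m \<rho> (inv (h \<otimes> g \<otimes> inv h) \<otimes> h) = f g \<cdot>\<^sub>m \<rho> (h \<otimes> inv g)"
            using e1 by simp
        qed
        finally show ?thesis by simp
      qed
      also have "\<dots> = msum n n (\<lambda>g. (f g \<cdot>\<^sub>m \<rho> (inv g)) * \<rho> h) (carrier G)"
      proof (rule msum_cong)
        fix g assume g: "g \<in> carrier G"
        show "f g \<cdot>\<^sub>m \<rho> (inv g \<otimes> h) = (f g \<cdot>\<^sub>m \<rho> (inv g)) * \<rho> h"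
          using mult_smult_assoc_mat[OF rc[OF inv_closed[OF g]] rc[OF h]] rep_mult[OF isr inv_closed[OF g] h]
          by simp
      qed
      also have "\<dots> = T * \<rho> h"
        unfolding T_def by (rule msum_mult_right[symmetric, OF rc[OF h] Fc])
      finally show "\<rho> h * T = T * \<rho> h" .
    qed
    obtain c where c: "T = c \<cdot>\<^sub>m 1\<^sub>m n" using schur_scalar[OF r T comm] by auto
    define \<chi> where "\<chi> = (\<lambda>g. if g \<in> carrier G then mat_trace (\<rho> g) else 0)"
    have chi: "\<chi> \<in> Irr G" unfolding Irr_def \<chi>_def using r by auto
    have "mat_trace T = (\<Sum>g\<in>carrier G. mat_trace (f g \<cdot>\<^sub>m \<rho> (inv g)))"
      unfolding T_def by (rule msum_trace) (use Fc in auto)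
    also have "\<dots> = (\<Sum>g\<in>carrier G. f g * cnj (\<chi> g))"
    proof (rule sum.cong[OF refl])
      fix g assume g: "g \<in> carrier G"
      have "mat_trace (f g \<cdot>\<^sub>m \<rho> (inv g)) = f g * mat_trace (\<rho> (inv g))"
        using rc[of "inv g"] g unfolding mat_trace_def by (simp add: sum_distrib_left)
      thus "mat_trace (f g \<cdot>\<^sub>m \<rho> (inv g)) = f g * cnj (\<chi> g)"
        unfolding \<chi>_def using g rep_char_bound(2)[OF fin isr g] by simp
    qed
    also have "\<dots> = 0" using orth chi by auto
    finally have "mat_trace T = 0" .
    moreover have "mat_trace T = c * of_nat n" unfolding c mat_trace_def by simp
    ultimately have "c = 0" using rep_pos[OF isr] by simp
    hence T0: "T = 0\<^sub>m n n" using c by auto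
    show "\<forall>y \<in> carrier G. (\<Sum>g\<in>carrier G. f g * mat_trace (\<rho> (inv g \<otimes> y))) = 0"
    proof
      fix y assume y: "y \<in> carrier G"
      have "T * \<rho> y = msum n n (\<lambda>g. (f g \<cdot>\<^sub>m \<rho> (inv g)) * \<rho> y) (carrier G)"
        unfolding T_def by (rule msum_mult_right[OF rc[OF y] Fc])
      have Fc2: "\<And>g. g \<in> carrier G \<Longrightarrow> (f g \<cdot>\<^sub>m \<rho> (inv g)) * \<rho> y \<in> carrier_mat n n"
      proof -
        fix g assume g: "g \<in> carrier G"
        show "(f g \<cdot>\<^sub>m \<rho> (inv g)) * \<rho> y \<in> carrier_mat n n" using Fc[OF g] rc[OF y] by auto
      qed
      have "mat_trace (T * \<rho> y) = (\<Sum>g\<in>carrier G. mat_trace ((f g \<cdot>\<^sub>m \<rho> (inv g)) * \<rho> y))"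
        unfolding \<open>T * \<rho> y = _\<close> by (rule msum_trace[OF Fc2])
      also have "\<dots> = (\<Sum>g\<in>carrier G. f g * mat_trace (\<rho> (inv g \<otimes> y)))"
      proof (rule sum.cong[OF refl])
        fix g assume g: "g \<in> carrier G"
        have "(f g \<cdot>\<^sub>m \<rho> (inv g)) * \<rho> y = f g \<cdot>\<^sub>m \<rho> (inv g \<otimes> y)"
          using mult_smult_assoc_mat[OF rc[OF inv_closed[OF g]] rc[OF y]] rep_mult[OF isr inv_closed[OF g] y]
          by simp
        moreover have "\<rho> (inv g \<otimes> y) \<in> carrier_mat n n" using rc g y by auto
        ultimately show "mat_trace ((f g \<cdot>\<^sub>m \<rho> (inv g)) * \<rho> y) = f g * mat_trace (\<rho> (inv g \<otimes> y))"
          unfolding mat_trace_def by (simp add: sum_distrib_left)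
      qed
      finally show "(\<Sum>g\<in>carrier G. f g * mat_trace (\<rho> (inv g \<otimes> y))) = 0"
        using T0 rc[OF y] by (simp add: mat_trace_def)
    qed
  qed
  have keyI: "\<And>\<chi>. \<chi> \<in> Irr G \<Longrightarrow> (\<Sum>g\<in>carrier G. f g * \<chi> (inv g \<otimes> x)) = 0"
  proof -
    fix \<chi> assume "\<chi> \<in> Irr G"
    then obtain n \<rho> where r: "irreducible_rep G n \<rho>" and c: "\<chi> = (\<lambda>g. if g \<in> carrier G then mat_trace (\<rho> g) else 0)"
      unfolding Irr_def by auto
    have "(\<Sum>g\<in>carrier G. f g * \<chi> (inv g \<otimes> x)) = (\<Sum>g\<in>carrier G. f g * mat_trace (\<rho> (inv g \<otimes> x)))"
      unfolding c using x by (intro sum.cong refl) auto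
    thus "(\<Sum>g\<in>carrier G. f g * \<chi> (inv g \<otimes> x)) = 0" using key[OF r] x by simp
  qed
  obtain R where R: "is_rep G (card (carrier G)) R"
    "\<forall>g \<in> carrier G. mat_trace (R g) = (if g = \<one> then of_nat (card (carrier G)) else 0)"
    using regular_rep[OF fin] by auto
  obtain cs where cs: "set cs \<subseteq> Irr G" "\<forall>g \<in> carrier G. mat_trace (R g) = (\<Sum>c\<leftarrow>cs. c g)"
    using rep_decomp[OF R(1)] by auto
  have "(\<Sum>g\<in>carrier G. f g * mat_trace (R (inv g \<otimes> x))) = (\<Sum>g\<in>carrier G. if g = x then f x * of_nat (card (carrier G)) else 0)"
  proof (rule sum.cong[OF refl])
    fix g assume g: "g \<in> carrier G"
    have "inv g \<otimes> x = \<one> \<longleftrightarrow> g = x" using g x by (metis inv_closed inv_inv r_inv inv_equality)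
    thus "f g * mat_trace (R (inv g \<otimes> x)) = (if g = x then f x * of_nat (card (carrier G)) else 0)"
      using R(2) g x by auto
  qed
  also have "\<dots> = f x * of_nat (card (carrier G))" using x fin by simp
  finally have e1: "(\<Sum>g\<in>carrier G. f g * mat_trace (R (inv g \<otimes> x))) = f x * of_nat (card (carrier G))" .
  have "(\<Sum>g\<in>carrier G. f g * mat_trace (R (inv g \<otimes> x))) = (\<Sum>g\<in>carrier G. \<Sum>c\<leftarrow>cs. f g * c (inv g \<otimes> x))"
    using cs(2) x by (intro sum.cong refl) (simp add: sum_list_const_mult)
  also have "\<dots> = (\<Sum>c\<leftarrow>cs. \<Sum>g\<in>carrier G. f g * c (inv g \<otimes> x))"
    by (induction cs) (auto simp: sum.distrib)
  also have "\<dots> = 0" using keyI cs(1) by (induction cs) auto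
  finally have "f x * of_nat (card (carrier G)) = 0" using e1 by simp
  moreover have "card (carrier G) > 0" using fin one_closed card_gt_0_iff by blast
  ultimately show ?thesis by simp
qed

end

context group
begin

lemma Irr_finite:
  assumes fin: "finite (carrier G)"
  shows "finite (Irr G)"
proof -
  obtain R where R: "is_rep G (card (carrier G)) R"
    "\<forall>g \<in> carrier G. mat_trace (R g) = (if g = \<one> then of_nat (card (carrier G)) else 0)"
    using regular_rep[OF fin] by auto
  obtain cs where cs: "set cs \<subseteq> Irr G" "\<forall>g \<in> carrier G. mat_trace (R g) = (\<Sum>c\<leftarrow>cs. c g)"
    using rep_decomp[OF R(1)] by auto
  have Npos: "card (carrier G) > 0" using fin one_closed card_gt_0_iff by blast
  have "Irr G \<subseteq> set cs"
  proof
    fix \<chi> assume chi: "\<chi> \<in> Irr G"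
    obtain n where n: "n > 0" "\<chi> \<one> = of_nat n" using Irr_char[OF fin chi] by auto
    have "(\<Sum>g\<in>carrier G. mat_trace (R g) * cnj (\<chi> g))
        = (\<Sum>g\<in>carrier G. if g = \<one> then of_nat (card (carrier G)) * cnj (\<chi> \<one>) else 0)"
      using R(2) by (intro sum.cong refl) auto
    also have "\<dots> = of_nat (card (carrier G)) * of_nat n" using fin n by simp
    finally have e1: "(\<Sum>g\<in>carrier G. mat_trace (R g) * cnj (\<chi> g)) = of_nat (card (carrier G)) * of_nat n" .
    have "(\<Sum>g\<in>carrier G. mat_trace (R g) * cnj (\<chi> g)) = (\<Sum>g\<in>carrier G. \<Sum>c\<leftarrow>cs. c g * cnj (\<chi> g))"
      using cs(2) by (intro sum.cong refl) (simp add: sum_list_mult_const)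
    also have "\<dots> = (\<Sum>c\<leftarrow>cs. \<Sum>g\<in>carrier G. c g * cnj (\<chi> g))"
      by (induction cs) (auto simp: sum.distrib)
    also have "\<dots> = (\<Sum>c\<leftarrow>cs. if c = \<chi> then of_nat (card (carrier G)) else 0)"
    proof -
      have "\<And>c. c \<in> set cs \<Longrightarrow> (\<Sum>g\<in>carrier G. c g * cnj (\<chi> g)) = (if c = \<chi> then of_nat (card (carrier G)) else 0)"
        using Irr_orth[OF fin _ chi] cs(1) by auto
      thus ?thesis by (induction cs) auto
    qed
    finally have e2: "(\<Sum>g\<in>carrier G. mat_trace (R g) * cnj (\<chi> g)) = (\<Sum>c\<leftarrow>cs. if c = \<chi> then of_nat (card (carrier G)) else 0)" .
    show "\<chi> \<in> set cs"
    proof (rule ccontr)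
      assume "\<chi> \<notin> set cs"
      hence "(\<Sum>c\<leftarrow>cs. if c = \<chi> then of_nat (card (carrier G)) else (0::complex)) = 0"
        by (induction cs) auto
      with e1 e2 n Npos show False by simp
    qed
  qed
  thus ?thesis using finite_subset by blast
qed

lemma expand_class_fun:
  assumes fin: "finite (carrier G)"
    and cf: "\<forall>g \<in> carrier G. \<forall>h \<in> carrier G. f (inv h \<otimes> g \<otimes> h) = f g"
    and x: "x \<in> carrier G"
  shows "f x = (\<Sum>\<chi>\<in>Irr G. (\<Sum>g\<in>carrier G. f g * cnj (\<chi> g)) / of_nat (card (carrier G)) * \<chi> x)"
proof -
  define N :: complex where "N = of_nat (card (carrier G))"
  have N0: "N \<noteq> 0" unfolding N_def using fin one_closed card_gt_0_iff by auto
  define ip where "ip = (\<lambda>\<chi>. (\<Sum>g\<in>carrier G. f g * cnj (\<chi> g)))"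
  define f' where "f' = (\<lambda>y. f y - (\<Sum>\<chi>\<in>Irr G. ip \<chi> / N * \<chi> y))"
  have finI: "finite (Irr G)" using Irr_finite[OF fin] .
  have cf': "\<forall>g \<in> carrier G. \<forall>h \<in> carrier G. f' (inv h \<otimes> g \<otimes> h) = f' g"
  proof (intro ballI)
    fix g h assume g: "g \<in> carrier G" and h: "h \<in> carrier G"
    have e: "\<And>\<chi>. \<chi> \<in> Irr G \<Longrightarrow> \<chi> (inv h \<otimes> g \<otimes> h) = \<chi> g"
      using Irr_char[OF fin] g h by blast
    have "(\<Sum>\<chi>\<in>Irr G. ip \<chi> / N * \<chi> (inv h \<otimes> g \<otimes> h)) = (\<Sum>\<chi>\<in>Irr G. ip \<chi> / N * \<chi> g)"
      using e by (intro sum.cong refl) simp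
    thus "f' (inv h \<otimes> g \<otimes> h) = f' g" unfolding f'_def using cf g h by simp
  qed
  have orth: "\<forall>\<psi> \<in> Irr G. (\<Sum>g\<in>carrier G. f' g * cnj (\<psi> g)) = 0"
  proof
    fix \<psi> assume psi: "\<psi> \<in> Irr G"
    have "(\<Sum>g\<in>carrier G. f' g * cnj (\<psi> g))
        = (\<Sum>g\<in>carrier G. f g * cnj (\<psi> g) - (\<Sum>\<chi>\<in>Irr G. ip \<chi> / N * \<chi> g) * cnj (\<psi> g))"
      unfolding f'_def by (simp add: left_diff_distrib)
    also have "\<dots> = ip \<psi> - (\<Sum>g\<in>carrier G. (\<Sum>\<chi>\<in>Irr G. ip \<chi> / N * \<chi> g) * cnj (\<psi> g))"
      by (simp add: sum_subtractf ip_def)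
    also have "(\<Sum>g\<in>carrier G. (\<Sum>\<chi>\<in>Irr G. ip \<chi> / N * \<chi> g) * cnj (\<psi> g))
        = (\<Sum>g\<in>carrier G. \<Sum>\<chi>\<in>Irr G. ip \<chi> / N * (\<chi> g * cnj (\<psi> g)))"
      by (simp add: sum_distrib_right mult.assoc)
    also have "(\<Sum>g\<in>carrier G. \<Sum>\<chi>\<in>Irr G. ip \<chi> / N * (\<chi> g * cnj (\<psi> g)))
        = (\<Sum>\<chi>\<in>Irr G. ip \<chi> / N * (\<Sum>g\<in>carrier G. \<chi> g * cnj (\<psi> g)))"
      by (simp add: sum.swap[of _ "carrier G"] sum_distrib_left)
    also have "\<dots> = (\<Sum>\<chi>\<in>Irr G. if \<chi> = \<psi> then ip \<chi> / N * N else 0)"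
      using Irr_orth[OF fin _ psi] unfolding N_def by (intro sum.cong refl) auto
    also have "\<dots> = ip \<psi>" using finI psi N0 by simp
    finally show "(\<Sum>g\<in>carrier G. f' g * cnj (\<psi> g)) = 0" by simp
  qed
  have "f' x = 0" by (rule class_fun_orth_zero[OF fin cf' orth x])
  thus ?thesis unfolding f'_def ip_def N_def by simp
qed

lemma conj_class_sub: "x \<in> carrier G \<Longrightarrow> conj_class G x \<subseteq> carrier G"
  unfolding conj_class_def by auto

lemma conj_class_self: "x \<in> carrier G \<Longrightarrow> x \<in> conj_class G x"
  unfolding conj_class_def by (auto intro!: exI[of _ \<one>])

lemma conj_class_inv:
  assumes x: "x \<in> carrier G" and g: "g \<in> carrier G" and h: "h \<in> carrier G"
  shows "inv h \<otimes> g \<otimes> h \<in> conj_class G x \<longleftrightarrow> g \<in> conj_class G x"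
proof
  assume "g \<in> conj_class G x"
  then obtain k where k: "k \<in> carrier G" "g = inv k \<otimes> x \<otimes> k" unfolding conj_class_def by auto
  have "inv h \<otimes> g \<otimes> h = inv (k \<otimes> h) \<otimes> x \<otimes> (k \<otimes> h)"
    using k x h by (simp add: inv_mult_group m_assoc)
  thus "inv h \<otimes> g \<otimes> h \<in> conj_class G x" unfolding conj_class_def using k h by blast
next
  assume "inv h \<otimes> g \<otimes> h \<in> conj_class G x"
  then obtain k where k: "k \<in> carrier G" "inv h \<otimes> g \<otimes> h = inv k \<otimes> x \<otimes> k" unfolding conj_class_def by auto
  have "g = h \<otimes> (inv h \<otimes> g \<otimes> h) \<otimes> inv h"
  proof -
    have hi: "inv h \<in> carrier G" using h by simp
    have "h \<otimes> (inv h \<otimes> g \<otimes> h) \<otimes> inv h = (h \<otimes> inv h) \<otimes> g \<otimes> (h \<otimes> inv h)"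
      using h g hi by (simp only: m_assoc m_closed)
    also have "\<dots> = g" using h g by simp
    finally show ?thesis by simp
  qed
  also have "\<dots> = inv (k \<otimes> inv h) \<otimes> x \<otimes> (k \<otimes> inv h)"
    using k x h by (simp add: inv_mult_group m_assoc)
  finally show "g \<in> conj_class G x" unfolding conj_class_def using k h by blast
qed

lemma Irr_const_class:
  assumes fin: "finite (carrier G)" and chi: "\<chi> \<in> Irr G" and x: "x \<in> carrier G"
    and y: "y \<in> conj_class G x"
  shows "\<chi> y = \<chi> x"
proof -
  obtain k where k: "k \<in> carrier G" "y = inv k \<otimes> x \<otimes> k" using y unfolding conj_class_def by auto
  thus ?thesis using Irr_char[OF fin chi] x by auto
qed

lemma col_orth:
  assumes fin: "finite (carrier G)" and x: "x \<in> carrier G" and y: "y \<in> carrier G"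
  shows "(\<Sum>\<chi>\<in>Irr G. cnj (\<chi> x) * \<chi> y)
     = (if y \<in> conj_class G x then of_nat (card (carrier G)) / of_nat (card (conj_class G x)) else 0)"
proof -
  define K where "K = card (conj_class G x)"
  define N :: complex where "N = of_nat (card (carrier G))"
  have N0: "N \<noteq> 0" unfolding N_def using fin one_closed card_gt_0_iff by auto
  have finC: "finite (conj_class G x)" using finite_subset[OF conj_class_sub[OF x] fin] .
  have K0: "K > 0" unfolding K_def using finC conj_class_self[OF x] card_gt_0_iff by blast
  define f :: "'a \<Rightarrow> complex" where "f = (\<lambda>y. if y \<in> conj_class G x then 1 else 0)"
  have cf: "\<forall>g \<in> carrier G. \<forall>h \<in> carrier G. f (inv h \<otimes> g \<otimes> h) = f g"
    unfolding f_def using conj_class_inv[OF x] by auto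
  have ip: "\<And>\<chi>. \<chi> \<in> Irr G \<Longrightarrow> (\<Sum>g\<in>carrier G. f g * cnj (\<chi> g)) = of_nat K * cnj (\<chi> x)"
  proof -
    fix \<chi> assume chi: "\<chi> \<in> Irr G"
    have "(\<Sum>g\<in>carrier G. f g * cnj (\<chi> g)) = (\<Sum>g\<in>conj_class G x. cnj (\<chi> g))"
    proof -
      have "(\<Sum>g\<in>carrier G. f g * cnj (\<chi> g)) = (\<Sum>g\<in>carrier G. if g \<in> conj_class G x then cnj (\<chi> g) else 0)"
        unfolding f_def by (intro sum.cong refl) auto
      also have "\<dots> = (\<Sum>g\<in>carrier G \<inter> conj_class G x. cnj (\<chi> g))"
        using fin by (simp add: sum.inter_restrict)
      also have "carrier G \<inter> conj_class G x = conj_class G x" using conj_class_sub[OF x] by auto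
      finally show ?thesis .
    qed
    also have "\<dots> = (\<Sum>g\<in>conj_class G x. cnj (\<chi> x))"
      using Irr_const_class[OF fin chi x] by (intro sum.cong) auto
    also have "\<dots> = of_nat K * cnj (\<chi> x)" unfolding K_def by simp
    finally show "(\<Sum>g\<in>carrier G. f g * cnj (\<chi> g)) = of_nat K * cnj (\<chi> x)" .
  qed
  have "f y = (\<Sum>\<chi>\<in>Irr G. (\<Sum>g\<in>carrier G. f g * cnj (\<chi> g)) / N * \<chi> y)"
    unfolding N_def by (rule expand_class_fun[OF fin cf y])
  also have "\<dots> = (\<Sum>\<chi>\<in>Irr G. of_nat K / N * (cnj (\<chi> x) * \<chi> y))"
    using ip by (intro sum.cong refl) auto
  also have "\<dots> = of_nat K / N * (\<Sum>\<chi>\<in>Irr G. cnj (\<chi> x) * \<chi> y)"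
    by (simp add: sum_distrib_left)
  finally have "(\<Sum>\<chi>\<in>Irr G. cnj (\<chi> x) * \<chi> y) = N / of_nat K * f y"
    using N0 K0 by (simp add: field_simps)
  thus ?thesis unfolding f_def N_def K_def by simp
qed

end

lemma cs_real:
  fixes a b :: "'c \<Rightarrow> real"
  assumes fin: "finite S"
  shows "(\<Sum>i\<in>S. a i * b i) \<le> sqrt (\<Sum>i\<in>S. (a i)\<^sup>2) * sqrt (\<Sum>i\<in>S. (b i)\<^sup>2)"
proof -
  define A where "A = (\<Sum>i\<in>S. (a i)\<^sup>2)"
  define B where "B = (\<Sum>i\<in>S. (b i)\<^sup>2)"
  define C where "C = (\<Sum>i\<in>S. a i * b i)"
  have e1: "(\<Sum>i\<in>S. \<Sum>j\<in>S. (a i * b j)\<^sup>2) = A * B"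
    unfolding A_def B_def by (simp add: sum_product power_mult_distrib)
  have e2: "(\<Sum>i\<in>S. \<Sum>j\<in>S. (a j * b i)\<^sup>2) = A * B"
    unfolding A_def B_def by (subst sum.swap) (simp add: sum_product power_mult_distrib)
  have e3: "(\<Sum>i\<in>S. \<Sum>j\<in>S. (a i * b j) * (a j * b i)) = C * C"
    unfolding C_def by (simp add: sum_product algebra_simps)
  have "0 \<le> (\<Sum>i\<in>S. \<Sum>j\<in>S. (a i * b j - a j * b i)\<^sup>2)" by (intro sum_nonneg) auto
  also have "\<dots> = (\<Sum>i\<in>S. \<Sum>j\<in>S. (a i * b j)\<^sup>2 + (a j * b i)\<^sup>2 - 2 * ((a i * b j) * (a j * b i)))"
    by (intro sum.cong refl) (simp add: power2_diff)
  also have "\<dots> = (\<Sum>i\<in>S. \<Sum>j\<in>S. (a i * b j)\<^sup>2) + (\<Sum>i\<in>S. \<Sum>j\<in>S. (a j * b i)\<^sup>2)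
      - 2 * (\<Sum>i\<in>S. \<Sum>j\<in>S. (a i * b j) * (a j * b i))"
    by (simp add: sum.distrib sum_subtractf sum_distrib_left)
  also have "\<dots> = A * B + A * B - 2 * (C * C)"
    using e1 e2 e3 by simp
  finally have "C * C \<le> A * B" by simp
  hence "C\<^sup>2 \<le> A * B" by (simp add: power2_eq_square)
  hence "\<bar>C\<bar> \<le> sqrt (A * B)" using real_sqrt_abs real_sqrt_le_mono by metis
  hence "C \<le> sqrt (A * B)" by simp
  thus ?thesis unfolding A_def B_def C_def by (simp add: real_sqrt_mult)
qed

lemma (in group) corollary1_aux:
  fixes H :: "'a set" and x :: 'a
  assumes "finite (carrier G)"
    and "subgroup H G"
    and "x \<in> H" and "x \<noteq> \<one>"
    and "\<forall>y \<in> H. y \<noteq> \<one> \<longrightarrow> card (conj_class G x) \<le> card (conj_class G y)"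
  shows "1 / (real (card H) * real (card (conj_class G x))) < D G H
       \<and> D G H \<le> (real (card H) - 1) / sqrt (real (card (conj_class G x)))"
proof -
  have fin: "finite (carrier G)" by fact
  have Hsub: "H \<subseteq> carrier G" using assms(2) subgroup.subset by blast
  have oneH: "\<one> \<in> H" using assms(2) subgroup.one_closed by blast
  have finH: "finite H" using finite_subset[OF Hsub fin] .
  have xH: "x \<in> H" and x1: "x \<noteq> \<one>" using assms by auto
  have xc: "x \<in> carrier G" using xH Hsub by auto
  define H' where "H' = H - {\<one>}"
  have finH': "finite H'" unfolding H'_def using finH by auto
  have H'c: "H' \<subseteq> carrier G" unfolding H'_def using Hsub by auto
  have cardH': "real (card H') = real (card H) - 1"
  proof -
    have "card H \<ge> 1" using finH oneH card_gt_0_iff by (metis One_nat_def Suc_leI empty_iff)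
    thus ?thesis unfolding H'_def using finH oneH by (simp add: card_Diff_singleton of_nat_diff)
  qed
  have cardH2: "card H \<ge> 2"
  proof -
    have "{\<one>, x} \<subseteq> H" using oneH xH by auto
    hence "card {\<one>, x} \<le> card H" using card_mono[OF finH] by blast
    thus ?thesis using x1 by simp
  qed
  define N where "N = card (carrier G)"
  have Npos: "N > 0" unfolding N_def using fin one_closed card_gt_0_iff by blast
  define K where "K = card (conj_class G x)"
  have Kpos_gen: "\<And>y. y \<in> carrier G \<Longrightarrow> card (conj_class G y) > 0"
    using finite_subset[OF conj_class_sub fin] conj_class_self card_gt_0_iff by blast
  have Kpos: "K > 0" unfolding K_def using Kpos_gen[OF xc] .
  have finI: "finite (Irr G)" using Irr_finite[OF fin] .
  define d where "d = (\<lambda>\<chi>::'a \<Rightarrow> complex. Re (\<chi> \<one>))"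
  have dprop: "\<And>\<chi>. \<chi> \<in> Irr G \<Longrightarrow> \<chi> \<one> = complex_of_real (d \<chi>) \<and> (\<forall>g \<in> carrier G. cmod (\<chi> g) \<le> d \<chi>)"
  proof -
    fix \<chi> assume chi: "\<chi> \<in> Irr G"
    obtain n where n: "n > 0" "\<chi> \<one> = of_nat n" "\<forall>g \<in> carrier G. cmod (\<chi> g) \<le> real n"
      using Irr_char[OF fin chi] by auto
    have "d \<chi> = real n" unfolding d_def using n by simp
    thus "\<chi> \<one> = complex_of_real (d \<chi>) \<and> (\<forall>g \<in> carrier G. cmod (\<chi> g) \<le> d \<chi>)" using n by simp
  qed
  have dnn: "\<And>\<chi>. \<chi> \<in> Irr G \<Longrightarrow> d \<chi> \<ge> 0"
    using dprop one_closed norm_ge_zero order_trans by metis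
  have sq: "\<And>y. y \<in> carrier G \<Longrightarrow> (\<Sum>\<chi>\<in>Irr G. (cmod (\<chi> y))\<^sup>2) = real N / real (card (conj_class G y))"
  proof -
    fix y assume y: "y \<in> carrier G"
    have "complex_of_real (\<Sum>\<chi>\<in>Irr G. (cmod (\<chi> y))\<^sup>2) = (\<Sum>\<chi>\<in>Irr G. cnj (\<chi> y) * \<chi> y)"
      unfolding of_real_sum by (intro sum.cong refl) (subst complex_norm_square, rule mult.commute)
    also have "\<dots> = of_nat N / of_nat (card (conj_class G y))"
      using col_orth[OF fin y y] conj_class_self[OF y] unfolding N_def by simp
    also have "\<dots> = complex_of_real (real N / real (card (conj_class G y)))" by simp
    finally show "(\<Sum>\<chi>\<in>Irr G. (cmod (\<chi> y))\<^sup>2) = real N / real (card (conj_class G y))"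
      using of_real_eq_iff by blast
  qed
  have cc1: "conj_class G \<one> = {\<one>}" unfolding conj_class_def by (auto intro!: exI[of _ \<one>])
  have d2: "(\<Sum>\<chi>\<in>Irr G. (d \<chi>)\<^sup>2) = real N"
  proof -
    have "(\<Sum>\<chi>\<in>Irr G. (d \<chi>)\<^sup>2) = (\<Sum>\<chi>\<in>Irr G. (cmod (\<chi> \<one>))\<^sup>2)"
    proof (rule sum.cong[OF refl])
      fix \<chi> assume c: "\<chi> \<in> Irr G"
      have "cmod (\<chi> \<one>) = d \<chi>" using dprop[OF c] dnn[OF c] by simp
      thus "(d \<chi>)\<^sup>2 = (cmod (\<chi> \<one>))\<^sup>2" by simp
    qed
    also have "\<dots> = real N" using sq[OF one_closed] cc1 by simp
    finally show ?thesis .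
  qed
  have csb: "\<And>h. h \<in> carrier G \<Longrightarrow> (\<Sum>\<chi>\<in>Irr G. d \<chi> * cmod (\<chi> h)) \<le> real N / sqrt (real (card (conj_class G h)))"
  proof -
    fix h assume h: "h \<in> carrier G"
    define Kh where "Kh = real (card (conj_class G h))"
    have Kh: "Kh > 0" unfolding Kh_def using Kpos_gen[OF h] by simp
    have "(\<Sum>\<chi>\<in>Irr G. d \<chi> * cmod (\<chi> h)) \<le> sqrt (\<Sum>\<chi>\<in>Irr G. (d \<chi>)\<^sup>2) * sqrt (\<Sum>\<chi>\<in>Irr G. (cmod (\<chi> h))\<^sup>2)"
      by (rule cs_real[OF finI])
    also have "\<dots> = sqrt (real N) * sqrt (real N / Kh)" using d2 sq[OF h] unfolding Kh_def by simp
    also have "\<dots> = real N / sqrt Kh" using Kh by (simp add: real_sqrt_divide)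
    finally show "(\<Sum>\<chi>\<in>Irr G. d \<chi> * cmod (\<chi> h)) \<le> real N / sqrt (real (card (conj_class G h)))"
      unfolding Kh_def .
  qed
  have Dd: "D G H = (1 / real N) * (\<Sum>\<chi>\<in>Irr G. d \<chi> * cmod (\<Sum>h\<in>H'. \<chi> h))"
    unfolding D_def d_def N_def H'_def by simp
  have "(\<Sum>\<chi>\<in>Irr G. d \<chi> * cmod (\<Sum>h\<in>H'. \<chi> h)) \<le> (\<Sum>\<chi>\<in>Irr G. d \<chi> * (\<Sum>h\<in>H'. cmod (\<chi> h)))"
    by (intro sum_mono mult_left_mono norm_sum dnn)
  also have "\<dots> = (\<Sum>h\<in>H'. \<Sum>\<chi>\<in>Irr G. d \<chi> * cmod (\<chi> h))"
    by (simp add: sum_distrib_left sum.swap[of _ "Irr G"])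
  also have "\<dots> \<le> (\<Sum>h\<in>H'. real N / sqrt (real K))"
  proof (rule sum_mono)
    fix h assume h: "h \<in> H'"
    have hc: "h \<in> carrier G" using h H'c by auto
    have "K \<le> card (conj_class G h)" unfolding K_def using assms(5) h unfolding H'_def by auto
    hence "sqrt (real K) \<le> sqrt (real (card (conj_class G h)))" by simp
    hence "real N / sqrt (real (card (conj_class G h))) \<le> real N / sqrt (real K)"
      using Kpos by (intro divide_left_mono) auto
    thus "(\<Sum>\<chi>\<in>Irr G. d \<chi> * cmod (\<chi> h)) \<le> real N / sqrt (real K)" using csb[OF hc] by linarith
  qed
  also have "\<dots> = real (card H') * real N / sqrt (real K)" by simp
  finally have up: "(\<Sum>\<chi>\<in>Irr G. d \<chi> * cmod (\<Sum>h\<in>H'. \<chi> h)) \<le> real (card H') * real N / sqrt (real K)" .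
  have upper: "D G H \<le> (real (card H) - 1) / sqrt (real K)"
  proof -
    have "D G H \<le> (1 / real N) * (real (card H') * real N / sqrt (real K))"
      unfolding Dd using up Npos by (intro mult_left_mono) auto
    also have "\<dots> = real (card H') / sqrt (real K)" using Npos by simp
    finally show ?thesis using cardH' by simp
  qed
  have "(\<Sum>\<chi>\<in>Irr G. cnj (\<chi> x) * (\<Sum>h\<in>H'. \<chi> h)) = (\<Sum>h\<in>H'. \<Sum>\<chi>\<in>Irr G. cnj (\<chi> x) * \<chi> h)"
    by (simp add: sum_distrib_left sum.swap[of _ "Irr G"])
  also have "\<dots> = (\<Sum>h\<in>H'. if h \<in> conj_class G x then of_nat N / of_nat K else 0)"
    using col_orth[OF fin xc] H'c unfolding N_def K_def by (intro sum.cong refl) auto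
  also have "\<dots> = of_nat (card (H' \<inter> conj_class G x)) * (of_nat N / of_nat K)"
    using finH' by (simp add: sum.If_cases)
  finally have lsum: "(\<Sum>\<chi>\<in>Irr G. cnj (\<chi> x) * (\<Sum>h\<in>H'. \<chi> h)) = of_nat (card (H' \<inter> conj_class G x)) * (of_nat N / of_nat K)" .
  have c1: "card (H' \<inter> conj_class G x) \<ge> 1"
  proof -
    have "x \<in> H' \<inter> conj_class G x" using xH x1 conj_class_self[OF xc] unfolding H'_def by auto
    thus ?thesis using finH' card_gt_0_iff by (metis One_nat_def Suc_leI empty_iff finite_Int)
  qed
  have "real N / real K \<le> real (card (H' \<inter> conj_class G x)) * (real N / real K)"
    using mult_right_mono[of 1 "real (card (H' \<inter> conj_class G x))" "real N / real K"] c1 by simp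
  also have "\<dots> = cmod (\<Sum>\<chi>\<in>Irr G. cnj (\<chi> x) * (\<Sum>h\<in>H'. \<chi> h))" unfolding lsum
    by (simp add: norm_mult norm_divide)
  also have "\<dots> \<le> (\<Sum>\<chi>\<in>Irr G. cmod (cnj (\<chi> x) * (\<Sum>h\<in>H'. \<chi> h)))" by (rule norm_sum)
  also have "\<dots> = (\<Sum>\<chi>\<in>Irr G. cmod (\<chi> x) * cmod (\<Sum>h\<in>H'. \<chi> h))" by (simp add: norm_mult)
  also have "\<dots> \<le> (\<Sum>\<chi>\<in>Irr G. d \<chi> * cmod (\<Sum>h\<in>H'. \<chi> h))"
    using dprop xc by (intro sum_mono mult_right_mono) auto
  finally have low: "real N / real K \<le> (\<Sum>\<chi>\<in>Irr G. d \<chi> * cmod (\<Sum>h\<in>H'. \<chi> h))" .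
  have lower: "1 / real K \<le> D G H"
  proof -
    have "1 / real K = (1 / real N) * (real N / real K)" using Npos by simp
    also have "\<dots> \<le> D G H" unfolding Dd using low Npos by (intro mult_left_mono) auto
    finally show ?thesis .
  qed
  have "1 / (real (card H) * real K) < 1 / real K"
    using cardH2 Kpos by (simp add: field_simps)
  with lower upper show ?thesis unfolding K_def by simp
qed

theorem corollary1:
  fixes G :: "('a, 'b) monoid_scheme" and H :: "'a set" and x :: 'a
  assumes "group G" and "finite (carrier G)"
    and "subgroup H G" and "H \<noteq> {\<one>\<^bsub>G\<^esub>}"
    and "x \<in> H" and "x \<noteq> \<one>\<^bsub>G\<^esub>"
    and "\<forall>y \<in> H. y \<noteq> \<one>\<^bsub>G\<^esub> \<longrightarrow> card (conj_class G x) \<le> card (conj_class G y)"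
  shows "1 / (real (card H) * real (card (conj_class G x))) < D G H
       \<and> D G H \<le> (real (card H) - 1) / sqrt (real (card (conj_class G x)))"
  using group.corollary1_aux[OF assms(1,2,3,5,6,7)] .

end
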